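(* Let $d\ge 2$ and $\Lambda>1$. There is a family $\mathcal{F}\subset C^\infty(\mathbb{T}^d;[1,\Lambda])$, dense in $C(\mathbb{T}^d;[1,\Lambda])$ with respect to the uniform norm, such that for every $a\in\mathcal{F}$ the following holds: for each uniformly continuous $u_0:\mathbb{R}^d\to\mathbb{R}$, if $(u^\varepsilon)_{\varepsilon>0}$ are the viscosity solutions of $$u^\varepsilon_t = a(\tfrac{x}{\varepsilon})\,\mathrm{tr}\big((\mathrm{Id}-\widehat{Du^\varepsilon}\otimes\widehat{Du^\varepsilon})D^2u^\varepsilon\big)+\varepsilon^{-1}Da(\tfrac{x}{\varepsilon})\cdot Du^\varepsilon \ \text{ in } \mathbb{R}^d\times(0,\infty),\qquad u^\varepsilon=u_0 \text{ on } \mathbb{R}^d\times\{0\},$$ then $\limsup^* u^\varepsilon\ \ge\ u_0\ \ge\ \liminf_* u^\varepsilon$ in $\mathbb{R}^d\times(0,\infty)$.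
   Context: $\widehat{p}=p/|p|$. $\mathbb{T}^d=\mathbb{R}^d/\mathbb{Z}^d$ and functions on it are identified with $\mathbb{Z}^d$-periodic functions. The half-relaxed limits are $\limsup^* u^\varepsilon(x,t)=\lim_{r\to0}\sup\{u^\varepsilon(y,s):0<\varepsilon<r,\ |y-x|+|s-t|<r\}$ and $\liminf_* u^\varepsilon(x,t)=\lim_{r\to0}\inf\{u^\varepsilon(y,s):0<\varepsilon<r,\ |y-x|+|s-t|<r\}$. Viscosity solutions of the degenerate geometric equation are understood in the standard sense (using semicontinuous envelopes of the operator at $Du=0$). *)

theory Defs
  imports "HOL-Analysis.Analysis" "HOL-Library.Liminf_Limsup"
begin

definition pdiff :: "'a::euclidean_space \<Rightarrow> ('a \<Rightarrow> real) \<Rightarrow> 'a \<Rightarrow> real" where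
  "pdiff b f x = frechet_derivative f (at x) b"

fun Ck :: "nat \<Rightarrow> ('a::euclidean_space \<Rightarrow> real) \<Rightarrow> bool" where
  "Ck 0 f = continuous_on UNIV f"
| "Ck (Suc k) f = ((\<forall>x. f differentiable (at x)) \<and> (\<forall>b\<in>Basis. Ck k (pdiff b f)))"

definition smooth_fun :: "('a::euclidean_space \<Rightarrow> real) \<Rightarrow> bool" where
  "smooth_fun f = (\<forall>k. Ck k f)"

section \<open>Periodic functions (functions on the torus)\<close>

definition zperiodic :: "(real^'d \<Rightarrow> real) \<Rightarrow> bool" where
  "zperiodic f = (\<forall>x z. (\<forall>i. z $ i \<in> \<int>) \<longrightarrow> f (x + z) = f x)"

definition grad :: "(real^'d \<Rightarrow> real) \<Rightarrow> real^'d \<Rightarrow> real^'d" where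
  "grad f y = (\<chi> i. frechet_derivative f (at y) (axis i 1))"

text \<open>G(x,p,X) = a(x/eps) tr((Id - phat (x) phat) X) + eps^-1 Da(x/eps) . p, phat = p/|p|
  (only meaningful for p nonzero; at p = 0 the envelopes are used).\<close>
definition geoG :: "(real^'d \<Rightarrow> real) \<Rightarrow> real \<Rightarrow> real^'d \<Rightarrow> real^'d \<Rightarrow> real^'d^'d \<Rightarrow> real" where
  "geoG a eps x p X =
     a ((1/eps) *\<^sub>R x) *
       (\<Sum>i\<in>UNIV. \<Sum>j\<in>UNIV. ((if i = j then 1 else 0) - (p /\<^sub>R norm p) $ i * (p /\<^sub>R norm p) $ j) * X $ j $ i)
     + (1/eps) * (grad a ((1/eps) *\<^sub>R x) \<bullet> p)"

text \<open>Upper / lower semicontinuous envelopes of G, taken over the region p nonzero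
  (G is continuous there, so they agree with G for p nonzero).\<close>
definition Gupper :: "(real^'d \<Rightarrow> real) \<Rightarrow> real \<Rightarrow> real^'d \<Rightarrow> real^'d \<Rightarrow> real^'d^'d \<Rightarrow> ereal" where
  "Gupper a eps x p X = Limsup (at (x, p, X) within {w. fst (snd w) \<noteq> 0})
       (\<lambda>(y, q, Y). ereal (geoG a eps y q Y))"

definition Glower :: "(real^'d \<Rightarrow> real) \<Rightarrow> real \<Rightarrow> real^'d \<Rightarrow> real^'d \<Rightarrow> real^'d^'d \<Rightarrow> ereal" where
  "Glower a eps x p X = Liminf (at (x, p, X) within {w. fst (snd w) \<noteq> 0})
       (\<lambda>(y, q, Y). ereal (geoG a eps y q Y))"

definition Dx :: "((real^'d) \<times> real \<Rightarrow> real) \<Rightarrow> (real^'d) \<times> real \<Rightarrow> real^'d" where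
  "Dx \<phi> z = (\<chi> i. frechet_derivative \<phi> (at z) (axis i 1, 0))"

definition Dxx :: "((real^'d) \<times> real \<Rightarrow> real) \<Rightarrow> (real^'d) \<times> real \<Rightarrow> real^'d^'d" where
  "Dxx \<phi> z = (\<chi> i j. frechet_derivative (\<lambda>w. frechet_derivative \<phi> (at w) (axis j 1, 0)) (at z) (axis i 1, 0))"

definition Dt :: "((real^'d) \<times> real \<Rightarrow> real) \<Rightarrow> (real^'d) \<times> real \<Rightarrow> real" where
  "Dt \<phi> z = frechet_derivative \<phi> (at z) (0, 1)"

definition visc_sub :: "(real^'d \<Rightarrow> real) \<Rightarrow> real \<Rightarrow> (real^'d \<Rightarrow> real \<Rightarrow> real) \<Rightarrow> bool" where
  "visc_sub a eps u = (\<forall>\<phi> x t. Ck 2 \<phi> \<and> t > 0 \<and>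
      (\<forall>\<^sub>F w in at (x, t). u (fst w) (snd w) - \<phi> w \<le> u x t - \<phi> (x, t)) \<longrightarrow>
      ereal (Dt \<phi> (x, t)) \<le> Gupper a eps x (Dx \<phi> (x, t)) (Dxx \<phi> (x, t)))"

definition visc_super :: "(real^'d \<Rightarrow> real) \<Rightarrow> real \<Rightarrow> (real^'d \<Rightarrow> real \<Rightarrow> real) \<Rightarrow> bool" where
  "visc_super a eps u = (\<forall>\<phi> x t. Ck 2 \<phi> \<and> t > 0 \<and>
      (\<forall>\<^sub>F w in at (x, t). u (fst w) (snd w) - \<phi> w \<ge> u x t - \<phi> (x, t)) \<longrightarrow>
      ereal (Dt \<phi> (x, t)) \<ge> Glower a eps x (Dx \<phi> (x, t)) (Dxx \<phi> (x, t)))"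

definition visc_solution :: "(real^'d \<Rightarrow> real) \<Rightarrow> real \<Rightarrow> (real^'d \<Rightarrow> real) \<Rightarrow> (real^'d \<Rightarrow> real \<Rightarrow> real) \<Rightarrow> bool" where
  "visc_solution a eps u0 u =
     (continuous_on {w :: (real^'d) \<times> real. snd w \<ge> 0} (\<lambda>w. u (fst w) (snd w)) \<and>
      (\<forall>x. u x 0 = u0 x) \<and> visc_sub a eps u \<and> visc_super a eps u)"

definition hr_limsup :: "(real \<Rightarrow> real^'d \<Rightarrow> real \<Rightarrow> real) \<Rightarrow> real^'d \<Rightarrow> real \<Rightarrow> ereal" where
  "hr_limsup u x t = (INF r\<in>{0<..}. SUP w\<in>{(e, y, s). 0 < e \<and> e < r \<and> norm (y - x) + \<bar>s - t\<bar> < r}.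
       ereal (u (fst w) (fst (snd w)) (snd (snd w))))"

definition hr_liminf :: "(real \<Rightarrow> real^'d \<Rightarrow> real \<Rightarrow> real) \<Rightarrow> real^'d \<Rightarrow> real \<Rightarrow> ereal" where
  "hr_liminf u x t = (SUP r\<in>{0<..}. INF w\<in>{(e, y, s). 0 < e \<and> e < r \<and> norm (y - x) + \<bar>s - t\<bar> < r}.
       ereal (u (fst w) (fst (snd w)) (snd (snd w))))"

end

theory Submission
  imports Defs
begin


lemma pdiff_eq: "(f has_derivative f') (at x) \<Longrightarrow> pdiff b f x = f' b"
  unfolding pdiff_def using frechet_derivative_at by metis

lemma Ck_diff: "Ck (Suc k) f \<Longrightarrow> (f has_derivative frechet_derivative f (at x)) (at x)"
  using frechet_derivative_works by auto

lemma Ck_Suc_mono: "Ck (Suc k) f \<Longrightarrow> Ck k f"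
proof (induction k arbitrary: f)
  case 0
  then show ?case
    by (auto intro!: continuous_at_imp_continuous_on differentiable_imp_continuous_within)
next
  case (Suc k)
  then show ?case by auto
qed

lemma Ck_le: "Ck k f \<Longrightarrow> j \<le> k \<Longrightarrow> Ck j f"
proof (induction k)
  case 0 then show ?case by auto
next
  case (Suc k) then show ?case using Ck_Suc_mono le_Suc_eq by blast
qed

lemma Ck_cont: "Ck k f \<Longrightarrow> continuous_on UNIV f"
  using Ck_le[of k f 0] by auto

lemma Ck_const: "Ck k (\<lambda>x::'a::euclidean_space. c)"
proof (induction k arbitrary: c)
  case 0 then show ?case by auto
next
  case (Suc k)
  have "pdiff b (\<lambda>x::'a. c) = (\<lambda>x. 0)" for b
    by (auto simp: pdiff_def)
  then show ?case using Suc[of 0] by simp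
qed

lemma Ck_add:
  fixes f g :: "'a::euclidean_space \<Rightarrow> real"
  shows "Ck k f \<Longrightarrow> Ck k g \<Longrightarrow> Ck k (\<lambda>x. f x + g x)"
proof (induction k arbitrary: f g)
  case 0 then show ?case by (auto intro: continuous_on_add)
next
  case (Suc k)
  have "pdiff b (\<lambda>x. f x + g x) = (\<lambda>x. pdiff b f x + pdiff b g x)" for b
  proof
    fix x
    have "((\<lambda>x. f x + g x) has_derivative (\<lambda>h. frechet_derivative f (at x) h + frechet_derivative g (at x) h)) (at x)"
      using Ck_diff[OF Suc.prems(1)] Ck_diff[OF Suc.prems(2)] by (intro has_derivative_add)
    from pdiff_eq[OF this, of b] show "pdiff b (\<lambda>x. f x + g x) x = pdiff b f x + pdiff b g x"
      by (simp add: pdiff_def)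
  qed
  then show ?case using Suc by (auto intro: differentiable_add)
qed

lemma Ck_mult:
  fixes f g :: "'a::euclidean_space \<Rightarrow> real"
  shows "Ck k f \<Longrightarrow> Ck k g \<Longrightarrow> Ck k (\<lambda>x. f x * g x)"
proof (induction k arbitrary: f g)
  case 0 then show ?case by (auto intro: continuous_on_mult)
next
  case (Suc k)
  have "pdiff b (\<lambda>x. f x * g x) = (\<lambda>x. pdiff b f x * g x + f x * pdiff b g x)" for b
  proof
    fix x
    have "((\<lambda>x. f x * g x) has_derivative (\<lambda>h. f x * frechet_derivative g (at x) h + frechet_derivative f (at x) h * g x)) (at x)"
      using Ck_diff[OF Suc.prems(1)] Ck_diff[OF Suc.prems(2)] by (intro has_derivative_mult)
    from pdiff_eq[OF this, of b] show "pdiff b (\<lambda>x. f x * g x) x = pdiff b f x * g x + f x * pdiff b g x"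
      by (simp add: pdiff_def)
  qed
  moreover have "Ck k f" "Ck k g" using Suc.prems Ck_Suc_mono by blast+
  ultimately show ?case using Suc by (auto intro!: Ck_add differentiable_mult)
qed

lemma Ck_sum: "finite I \<Longrightarrow> (\<And>i. i \<in> I \<Longrightarrow> Ck k (f i)) \<Longrightarrow> Ck k (\<lambda>x. \<Sum>i\<in>I. f i x)"
proof (induction I rule: finite_induct)
  case empty then show ?case using Ck_const by simp
next
  case (insert i I) then show ?case by (simp add: Ck_add)
qed

lemma Ck_linear:
  fixes f :: "'a::euclidean_space \<Rightarrow> real"
  shows "bounded_linear f \<Longrightarrow> Ck k f"
proof (induction k)
  case 0 then show ?case by (simp add: linear_continuous_on)
next
  case (Suc k)
  have "pdiff b f = (\<lambda>x. f b)" for b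
    using Suc.prems by (auto simp: pdiff_eq bounded_linear_imp_has_derivative)
  then show ?case using Suc Ck_const
    by (auto simp: bounded_linear_imp_differentiable)
qed

fun Rk :: "nat \<Rightarrow> (real \<Rightarrow> real) \<Rightarrow> bool" where
  "Rk 0 h = continuous_on UNIV h"
| "Rk (Suc k) h = (\<exists>h'. (\<forall>x. (h has_real_derivative h' x) (at x)) \<and> Rk k h')"

lemma Rk_Suc_mono: "Rk (Suc k) h \<Longrightarrow> Rk k h"
proof (induction k arbitrary: h)
  case 0
  then show ?case
    using DERIV_isCont by (auto intro!: continuous_at_imp_continuous_on)
next
  case (Suc k)
  then show ?case by auto
qed

lemma Ck_comp:
  fixes f :: "'a::euclidean_space \<Rightarrow> real"
  shows "Rk k h \<Longrightarrow> Ck k f \<Longrightarrow> Ck k (\<lambda>x. h (f x))"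
proof (induction k arbitrary: h f)
  case 0 then show ?case
    by (auto intro: continuous_on_compose2[of UNIV h UNIV f])
next
  case (Suc k)
  obtain h' where h': "\<And>x. (h has_real_derivative h' x) (at x)" "Rk k h'"
    using Suc.prems by auto
  have D: "((\<lambda>x. h (f x)) has_derivative (\<lambda>v. h' (f x) * frechet_derivative f (at x) v)) (at x)" for x
  proof -
    have "((h \<circ> f) has_derivative ((\<lambda>y. h' (f x) * y) \<circ> frechet_derivative f (at x))) (at x)"
      using Ck_diff[OF Suc.prems(2)] h'(1)[of "f x", unfolded has_field_derivative_def]
      by (intro diff_chain_at) auto
    then show ?thesis by (simp add: o_def)
  qed
  have "pdiff b (\<lambda>x. h (f x)) = (\<lambda>x. h' (f x) * pdiff b f x)" for b
  proof
    fix x show "pdiff b (\<lambda>x. h (f x)) x = h' (f x) * pdiff b f x"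
      using pdiff_eq[OF D[of x], of b] by (simp add: pdiff_def)
  qed
  moreover have "Ck k f" using Suc.prems Ck_Suc_mono by blast
  moreover have "(\<lambda>x. h (f x)) differentiable (at x)" for x
    using D[of x] by (auto simp: differentiable_def)
  ultimately show ?case using Suc.IH[of h' f] Suc.prems h'
    by (auto intro!: Ck_mult)
qed


lemma Rk_trig: "Rk k sin \<and> Rk k cos \<and> Rk k (\<lambda>x. - sin x) \<and> Rk k (\<lambda>x. - cos x)"
proof (induction k)
  case 0 then show ?case by (auto intro!: continuous_intros)
next
  case (Suc k)
  have "\<forall>x. (sin has_real_derivative cos x) (at x)" "\<forall>x. (cos has_real_derivative - sin x) (at x)"
       "\<forall>x. ((\<lambda>x. - sin x) has_real_derivative - cos x) (at x)"
       "\<forall>x. ((\<lambda>x. - cos x) has_real_derivative - (- sin x)) (at x)"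
    by (auto intro!: derivative_eq_intros)
  note d = this
  have "Rk (Suc k) sin" unfolding Rk.simps by (rule exI[of _ cos]) (use Suc d in auto)
  moreover have "Rk (Suc k) cos" unfolding Rk.simps by (rule exI[of _ "\<lambda>x. - sin x"]) (use Suc d in auto)
  moreover have "Rk (Suc k) (\<lambda>x. - sin x)" unfolding Rk.simps by (rule exI[of _ "\<lambda>x. - cos x"]) (use Suc d in auto)
  moreover have "Rk (Suc k) (\<lambda>x. - cos x)" unfolding Rk.simps by (rule exI[of _ "sin"]) (use Suc d in auto)
  ultimately show ?case by blast
qed

lemma Rk_sin: "Rk k sin" and Rk_cos: "Rk k cos"
  using Rk_trig by auto

lemma Rk_exp: "Rk k exp"
proof (induction k)
  case 0 then show ?case by (auto intro!: continuous_intros)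
next
  case (Suc k)
  have "\<forall>x. (exp has_real_derivative exp x) (at x)" by (auto intro!: derivative_eq_intros)
  then show ?case unfolding Rk.simps by (intro exI[of _ exp]) (use Suc in auto)
qed

lemma DERIV_xabs: "((\<lambda>x::real. x * \<bar>x\<bar>) has_real_derivative 2 * \<bar>x\<bar>) (at x)"
proof -
  consider "x > 0" | "x < 0" | "x = 0" by linarith
  then show ?thesis
  proof cases
    case 1
    have "((\<lambda>x::real. x * x) has_real_derivative 2 * \<bar>x\<bar>) (at x)"
      using 1 by (auto intro!: derivative_eq_intros)
    then show ?thesis
      by (rule has_field_derivative_transform_within_open[where S="{0<..}"]) (use 1 in auto)
  next
    case 2
    have "((\<lambda>x::real. - (x * x)) has_real_derivative 2 * \<bar>x\<bar>) (at x)"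
      using 2 by (auto intro!: derivative_eq_intros)
    then show ?thesis
      by (rule has_field_derivative_transform_within_open[where S="{..<0}"]) (use 2 in auto)
  next
    case 3
    have "((\<lambda>y::real. \<bar>y\<bar>) \<longlongrightarrow> 0) (at 0)"
      using tendsto_rabs[OF tendsto_ident_at[of 0 UNIV]] by simp
    moreover have "\<forall>\<^sub>F y in at (0::real). \<bar>y\<bar> = (y * \<bar>y\<bar> - 0 * \<bar>0\<bar>) / (y - 0)"
      by (auto simp: eventually_at_filter)
    ultimately have "((\<lambda>y::real. (y * \<bar>y\<bar> - 0 * \<bar>0\<bar>) / (y - 0)) \<longlongrightarrow> 0) (at 0)"
      using tendsto_cong by fastforce
    then show ?thesis using 3 by (simp add: has_field_derivative_iff)
  qed
qed

definition h3 :: "real \<Rightarrow> real" where "h3 x = (x^3 + x * (x * \<bar>x\<bar>)) / 2"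
definition h2 :: "real \<Rightarrow> real" where "h2 x = 3 * (x^2 + x * \<bar>x\<bar>) / 2"
definition h1 :: "real \<Rightarrow> real" where "h1 x = 3 * x + 3 * \<bar>x\<bar>"

lemma h3_eq: "h3 x = (max 0 x)^3" and h2_eq: "h2 x = 3 * (max 0 x)^2" and h1_eq: "h1 x = 6 * max 0 x"
  by (auto simp: h3_def h2_def h1_def max_def power3_eq_cube power2_eq_square)

lemma DERIV_h3: "(h3 has_real_derivative h2 x) (at x)"
proof -
  have "((\<lambda>x. (x^3 + x * (x * \<bar>x\<bar>)) / 2) has_real_derivative h2 x) (at x)"
    by (rule DERIV_xabs derivative_eq_intros refl)+ (simp_all add: h2_def field_simps power2_eq_square eval_nat_numeral)
  then show ?thesis unfolding h3_def[abs_def] .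
qed

lemma DERIV_h2: "(h2 has_real_derivative h1 x) (at x)"
proof -
  have "((\<lambda>x. 3 * (x^2 + x * \<bar>x\<bar>) / 2) has_real_derivative h1 x) (at x)"
    by (rule DERIV_xabs derivative_eq_intros refl)+ (simp_all add: h1_def field_simps power2_eq_square eval_nat_numeral)
  then show ?thesis unfolding h2_def[abs_def] .
qed

lemma Rk2_K: "Rk 2 (\<lambda>s. c0 - C * h3 (s - s1))"
proof -
  have d1: "\<forall>x. ((\<lambda>s. c0 - C * h3 (s - s1)) has_real_derivative - C * h2 (x - s1)) (at x)"
    by (auto intro!: derivative_eq_intros DERIV_h3[THEN DERIV_chain2])
  have d2: "\<forall>x. ((\<lambda>x. - C * h2 (x - s1)) has_real_derivative - C * h1 (x - s1)) (at x)"
    by (auto intro!: derivative_eq_intros DERIV_h2[THEN DERIV_chain2])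
  have c: "continuous_on UNIV (\<lambda>x. - C * h1 (x - s1))"
    unfolding h1_def by (auto intro!: continuous_intros)
  show ?thesis unfolding numeral_2_eq_2 Rk.simps
    by (rule exI[of _ "\<lambda>x. - C * h2 (x - s1)"], rule conjI[OF d1], rule exI[of _ "\<lambda>x. - C * h1 (x - s1)"]) (use d2 c in auto)
qed


definition Sf :: "real^'d \<Rightarrow> real" where "Sf z = (\<Sum>i\<in>UNIV. sin (pi * z$i)^2)"
definition vf :: "real^'d \<Rightarrow> real^'d" where "vf z = (\<chi> i. pi * sin (2 * pi * z$i))"
definition wv :: "real^'d \<Rightarrow> real^'d" where "wv z = (\<chi> i. 2 * pi^2 * cos (2 * pi * z$i))"

lemma hd_nth: "((\<lambda>z::real^'d. z$i) has_derivative (\<lambda>h. h$i)) (at z)"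
  by (rule bounded_linear_imp_has_derivative) (rule bounded_linear_vec_nth)

lemma hd_sin2: "((\<lambda>z::real^'d. sin (pi * z$i)^2) has_derivative (\<lambda>h. pi * sin (2 * pi * z$i) * h$i)) (at z)"
proof -
  have "((\<lambda>z::real^'d. sin (pi * z$i)^2) has_derivative (\<lambda>h. 2 * sin (pi * z$i) * (cos (pi * z$i) * (pi * h$i)))) (at z)"
    by (rule derivative_eq_intros hd_nth refl)+ (simp add: algebra_simps)
  moreover have "(\<lambda>h. 2 * sin (pi * z$i) * (cos (pi * z$i) * (pi * h$i))) = (\<lambda>h. pi * sin (2 * pi * z$i) * h$i)"
  proof -
    have "sin (2 * pi * z$i) = 2 * sin (pi * z$i) * cos (pi * z$i)"
      using sin_double[of "pi * z$i"] by (simp add: mult.assoc)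
    then show ?thesis by (auto simp: fun_eq_iff algebra_simps)
  qed
  ultimately show ?thesis by simp
qed

lemma hd_Sf: "(Sf has_derivative (\<lambda>h. vf z \<bullet> h)) (at z)"
proof -
  have "((\<lambda>z. \<Sum>i\<in>UNIV. sin (pi * z$i)^2) has_derivative (\<lambda>h. \<Sum>i\<in>UNIV. pi * sin (2 * pi * z$i) * h$i)) (at z)"
    by (rule has_derivative_sum) (rule hd_sin2)
  then show ?thesis unfolding Sf_def[abs_def] vf_def inner_vec_def by simp
qed

lemma hd_vf: "((\<lambda>z::real^'d. vf z $ j) has_derivative (\<lambda>h. wv z $ j * h$j)) (at z)"
proof -
  have "((\<lambda>z::real^'d. pi * sin (2 * pi * z$j)) has_derivative (\<lambda>h. pi * (cos (2 * pi * z$j) * (2 * pi * h$j)))) (at z)"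
    by (rule derivative_eq_intros hd_nth refl)+ (auto simp: fun_eq_iff algebra_simps)
  then show ?thesis unfolding vf_def wv_def by (simp add: algebra_simps power2_eq_square)
qed


definition phi :: "real \<Rightarrow> real \<Rightarrow> real \<Rightarrow> real \<Rightarrow> real \<Rightarrow> real \<Rightarrow> (real^'d) \<times> real \<Rightarrow> real" where
  "phi eps c0 C s1 eta L w = c0 - C * h3 (Sf ((1/eps) *\<^sub>R fst w) - s1) + eta * exp (L * snd w)"

lemma hd_scale_fst: "((\<lambda>w::(real^'d) \<times> real. (1/eps) *\<^sub>R fst w) has_derivative (\<lambda>hk. (1/eps) *\<^sub>R fst hk)) (at w)"
  by (rule bounded_linear_imp_has_derivative) (intro bounded_linear_intros)

lemma hd_SK:
  "((\<lambda>w::(real^'d) \<times> real. h3 (Sf ((1/eps) *\<^sub>R fst w) - s1)) has_derivative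
     (\<lambda>hk. h2 (Sf ((1/eps) *\<^sub>R fst w) - s1) * (vf ((1/eps) *\<^sub>R fst w) \<bullet> ((1/eps) *\<^sub>R fst hk)))) (at w)"
proof -
  have a: "((\<lambda>w::(real^'d) \<times> real. Sf ((1/eps) *\<^sub>R fst w) - s1) has_derivative
     (\<lambda>hk. vf ((1/eps) *\<^sub>R fst w) \<bullet> ((1/eps) *\<^sub>R fst hk))) (at w)"
    using has_derivative_diff[OF has_derivative_compose[OF hd_scale_fst hd_Sf] has_derivative_const[of s1]] by simp
  show ?thesis
    using has_derivative_compose[OF a DERIV_h3[unfolded has_field_derivative_def]] by simp
qed

lemma hd_phi:
  fixes w :: "(real^'d) \<times> real"
  shows "(phi eps c0 C s1 eta L has_derivative
     (\<lambda>hk. - C * h2 (Sf ((1/eps) *\<^sub>R fst w) - s1) * (vf ((1/eps) *\<^sub>R fst w) \<bullet> ((1/eps) *\<^sub>R fst hk))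
           + eta * (exp (L * snd w) * (L * snd hk)))) (at w)"
proof -
  have e: "((\<lambda>w::(real^'d) \<times> real. eta * exp (L * snd w)) has_derivative (\<lambda>hk. eta * (exp (L * snd w) * (L * snd hk)))) (at w)"
    by (rule derivative_eq_intros refl)+ (auto simp: fun_eq_iff)
  show ?thesis unfolding phi_def[abs_def]
    using has_derivative_add[OF has_derivative_diff[OF has_derivative_const has_derivative_mult_right[OF hd_SK]] e]
    by (simp add: algebra_simps)
qed

lemma Dt_phi: "Dt (phi eps c0 C s1 eta L) (y, s) = eta * L * exp (L * s)"
  unfolding Dt_def by (subst frechet_derivative_at[OF hd_phi, symmetric]) simp

lemma Dx_phi: "Dx (phi eps c0 C s1 eta L) (y, s) = (- C * h2 (Sf ((1/eps) *\<^sub>R y) - s1) / eps) *\<^sub>R vf ((1/eps) *\<^sub>R y)"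
  unfolding Dx_def by (subst frechet_derivative_at[OF hd_phi, symmetric]) (simp add: vec_eq_iff inner_axis)

lemma g_phi: "(\<lambda>w. frechet_derivative (phi eps c0 C s1 eta L) (at w) (axis j 1, 0)) =
   (\<lambda>w::(real^'d) \<times> real. - C * (h2 (Sf ((1/eps) *\<^sub>R fst w) - s1) * (vf ((1/eps) *\<^sub>R fst w) $ j / eps)))"
proof
  fix w :: "(real^'d) \<times> real"
  show "frechet_derivative (phi eps c0 C s1 eta L) (at w) (axis j 1, 0) = - C * (h2 (Sf ((1/eps) *\<^sub>R fst w) - s1) * (vf ((1/eps) *\<^sub>R fst w) $ j / eps))"
    by (subst frechet_derivative_at[OF hd_phi, symmetric]) (simp add: inner_axis)
qed

lemma hd_g:
  "((\<lambda>w::(real^'d) \<times> real. - C * (h2 (Sf ((1/eps) *\<^sub>R fst w) - s1) * (vf ((1/eps) *\<^sub>R fst w) $ j / eps))) has_derivative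
    (\<lambda>hk. - C * h1 (Sf ((1/eps) *\<^sub>R fst w) - s1) * (vf ((1/eps) *\<^sub>R fst w) \<bullet> ((1/eps) *\<^sub>R fst hk)) * (vf ((1/eps) *\<^sub>R fst w) $ j / eps)
         + - C * h2 (Sf ((1/eps) *\<^sub>R fst w) - s1) * (wv ((1/eps) *\<^sub>R fst w) $ j * ((1/eps) *\<^sub>R fst hk) $ j / eps))) (at w)"
proof -
  have a: "((\<lambda>w::(real^'d) \<times> real. Sf ((1/eps) *\<^sub>R fst w) - s1) has_derivative
     (\<lambda>hk. vf ((1/eps) *\<^sub>R fst w) \<bullet> ((1/eps) *\<^sub>R fst hk))) (at w)"
    using has_derivative_diff[OF has_derivative_compose[OF hd_scale_fst hd_Sf] has_derivative_const[of s1]] by simp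
  have b: "((\<lambda>w::(real^'d) \<times> real. h2 (Sf ((1/eps) *\<^sub>R fst w) - s1)) has_derivative
     (\<lambda>hk. h1 (Sf ((1/eps) *\<^sub>R fst w) - s1) * (vf ((1/eps) *\<^sub>R fst w) \<bullet> ((1/eps) *\<^sub>R fst hk)))) (at w)"
    using has_derivative_compose[OF a DERIV_h2[unfolded has_field_derivative_def]] by simp
  have c: "((\<lambda>w::(real^'d) \<times> real. vf ((1/eps) *\<^sub>R fst w) $ j / eps) has_derivative
     (\<lambda>hk. wv ((1/eps) *\<^sub>R fst w) $ j * ((1/eps) *\<^sub>R fst hk) $ j / eps)) (at w)"
    using has_derivative_mult_right[OF has_derivative_compose[OF hd_scale_fst hd_vf], of "1/eps"]
    by simp
  show ?thesis
    by (rule has_derivative_eq_rhs[OF has_derivative_mult_right[OF has_derivative_mult[OF b c]]])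
      (simp add: fun_eq_iff algebra_simps)
qed

lemma ax: "axis i (1::real) $ j = (if j = i then 1 else 0)" by (simp add: axis_def)

lemma Dxx_phi: "Dxx (phi eps c0 C s1 eta L) (y, s) =
  (\<chi> i j. (- C * h1 (Sf ((1/eps) *\<^sub>R y) - s1)) / eps^2 * vf ((1/eps) *\<^sub>R y) $ i * vf ((1/eps) *\<^sub>R y) $ j
        + (if i = j then (- C * h2 (Sf ((1/eps) *\<^sub>R y) - s1)) / eps^2 * wv ((1/eps) *\<^sub>R y) $ j else 0))"
proof -
  show ?thesis
  unfolding Dxx_def g_phi
  by (subst frechet_derivative_at[OF hd_g, symmetric]) (auto simp: vec_eq_iff inner_axis ax power2_eq_square)
qed

lemma bl_nth_comp: "bounded_linear l \<Longrightarrow> bounded_linear (\<lambda>w. c * (l w :: real^'d) $ i)"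
  by (intro bounded_linear_intros bounded_linear_compose[OF bounded_linear_vec_nth])

lemma Ck_Sf_lin:
  fixes l :: "'a::euclidean_space \<Rightarrow> real^'d"
  assumes "bounded_linear l"
  shows "Ck k (\<lambda>w. Sf (l w))"
proof -
  have "Ck k (\<lambda>w. \<Sum>i\<in>UNIV. sin (pi * l w $ i) * sin (pi * l w $ i))"
    by (intro Ck_sum Ck_mult Ck_comp[OF Rk_sin] Ck_linear bl_nth_comp assms) auto
  then show ?thesis unfolding Sf_def power2_eq_square .
qed

lemma Ck2_phi: "Ck 2 (phi eps c0 C s1 eta (L::real) :: (real^'d) \<times> real \<Rightarrow> real)"
proof -
  have bl: "bounded_linear (\<lambda>w::(real^'d) \<times> real. (1/eps) *\<^sub>R fst w)"
    by (intro bounded_linear_intros)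
  have "Ck 2 (\<lambda>w::(real^'d) \<times> real. (\<lambda>s. c0 - C * h3 (s - s1)) (Sf ((1/eps) *\<^sub>R fst w)) + eta * exp (L * snd w))"
    by (intro Ck_add Ck_comp[OF Rk2_K] Ck_Sf_lin[OF bl] Ck_mult Ck_const Ck_comp[OF Rk_exp] Ck_linear)
       (intro bounded_linear_intros)
  then show ?thesis unfolding phi_def[abs_def] by simp
qed


definition gG :: "(real^'d \<Rightarrow> real) \<Rightarrow> real \<Rightarrow> (real^'d) \<times> (real^'d) \<times> (real^'d^'d) \<Rightarrow> real" where
  "gG a eps w = geoG a eps (fst w) (fst (snd w)) (snd (snd w))"

lemma Glower_gG: "Glower a eps x p X = Liminf (at (x, p, X) within {w. fst (snd w) \<noteq> 0}) (\<lambda>w. ereal (gG a eps w))"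
  unfolding Glower_def gG_def by (simp add: case_prod_unfold)

lemma Gupper_gG: "Gupper a eps x p X = Limsup (at (x, p, X) within {w. fst (snd w) \<noteq> 0}) (\<lambda>w. ereal (gG a eps w))"
  unfolding Gupper_def gG_def by (simp add: case_prod_unfold)

lemma Liminf_ge_tendsto:
  assumes "(f \<longlongrightarrow> c) F"
  shows "ereal c \<le> Liminf F (\<lambda>w. ereal (f w))"
  unfolding le_Liminf_iff
proof (intro allI impI)
  fix y0 :: ereal assume "y0 < ereal c"
  then show "\<forall>\<^sub>F x in F. y0 < ereal (f x)"
  proof (cases y0)
    case (real r)
    then have "r < c" using \<open>y0 < ereal c\<close> by simp
    then show ?thesis using order_tendstoD(1)[OF assms \<open>r < c\<close>] real by (auto elim: eventually_mono)
  qed auto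
qed

lemma Limsup_le_tendsto:
  assumes "(f \<longlongrightarrow> c) F"
  shows "Limsup F (\<lambda>w. ereal (f w)) \<le> ereal c"
  unfolding Limsup_le_iff
proof (intro allI impI)
  fix y0 :: ereal assume "y0 > ereal c"
  then show "\<forall>\<^sub>F x in F. y0 > ereal (f x)"
  proof (cases y0)
    case (real r)
    then have "r > c" using \<open>y0 > ereal c\<close> by simp
    then show ?thesis using order_tendstoD(2)[OF assms \<open>r > c\<close>] real by (auto elim: eventually_mono)
  qed auto
qed

lemma Liminf_ge_bound:
  assumes "(B \<longlongrightarrow> 0) F" "\<And>w. - B w \<le> f w"
  shows "0 \<le> Liminf F (\<lambda>w. ereal (f w))"
  unfolding le_Liminf_iff
proof (intro allI impI)
  fix y0 :: ereal assume "y0 < 0"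
  then show "\<forall>\<^sub>F x in F. y0 < ereal (f x)"
  proof (cases y0)
    case (real r)
    then have "- r > 0" using \<open>y0 < 0\<close> by simp
    then show ?thesis using order_tendstoD(2)[OF assms(1) \<open>-r > 0\<close>] real assms(2)
      by (auto elim!: eventually_mono) (smt (verit) assms(2))
  qed auto
qed

lemma Limsup_le_bound:
  assumes "(B \<longlongrightarrow> 0) F" "\<And>w. f w \<le> B w"
  shows "Limsup F (\<lambda>w. ereal (f w)) \<le> 0"
  unfolding Limsup_le_iff
proof (intro allI impI)
  fix y0 :: ereal assume "y0 > 0"
  then show "\<forall>\<^sub>F x in F. y0 > ereal (f x)"
  proof (cases y0)
    case (real r)
    then have "r > 0" using \<open>y0 > 0\<close> by simp
    then show ?thesis using order_tendstoD(2)[OF assms(1) \<open>r > 0\<close>] real assms(2)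
      by (auto elim!: eventually_mono intro: le_less_trans)
  qed auto
qed

lemma abs_unit_comp: "\<bar>(q /\<^sub>R norm q) $ i\<bar> \<le> (1::real)" for q :: "real^'d"
proof -
  have "\<bar>(q /\<^sub>R norm q) $ i\<bar> \<le> norm (q /\<^sub>R norm q)" by (rule component_le_norm_cart)
  also have "\<dots> \<le> 1" by (cases "q = 0") auto
  finally show ?thesis .
qed

definition gB :: "(real^'d \<Rightarrow> real) \<Rightarrow> real \<Rightarrow> (real^'d) \<times> (real^'d) \<times> (real^'d^'d) \<Rightarrow> real" where
  "gB a eps w = \<bar>a ((1/eps) *\<^sub>R fst w)\<bar> * (\<Sum>i\<in>UNIV. \<Sum>j\<in>UNIV. 2 * \<bar>snd (snd w) $ j $ i\<bar>)
     + \<bar>1/eps\<bar> * \<bar>grad a ((1/eps) *\<^sub>R fst w) \<bullet> fst (snd w)\<bar>"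

lemma gG_bound: "\<bar>gG a eps w\<bar> \<le> gB a eps w"
proof -
  obtain y q Y where w: "w = (y, q, Y)" by (cases w) auto
  let ?n = "q /\<^sub>R norm q"
  have c: "\<bar>(if i = j then 1 else 0) - ?n $ i * ?n $ j\<bar> \<le> 2" for i j
  proof -
    have "\<bar>?n $ i * ?n $ j\<bar> \<le> 1"
      using abs_unit_comp[of q i] abs_unit_comp[of q j] by (simp add: abs_mult mult_le_one)
    moreover have "(if i = j then 1 else 0::real) = 0 \<or> (if i = j then 1 else 0::real) = 1" by auto
    ultimately show ?thesis by (smt (verit))
  qed
  have "\<bar>\<Sum>i\<in>UNIV. \<Sum>j\<in>UNIV. ((if i = j then 1 else 0) - ?n $ i * ?n $ j) * Y $ j $ i\<bar>
        \<le> (\<Sum>i\<in>UNIV. \<Sum>j\<in>UNIV. 2 * \<bar>Y $ j $ i\<bar>)"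
  proof -
    have "\<bar>\<Sum>i\<in>UNIV. \<Sum>j\<in>UNIV. ((if i = j then 1 else 0) - ?n $ i * ?n $ j) * Y $ j $ i\<bar>
        \<le> (\<Sum>i\<in>UNIV. \<bar>\<Sum>j\<in>UNIV. ((if i = j then 1 else 0) - ?n $ i * ?n $ j) * Y $ j $ i\<bar>)"
      by (rule sum_abs)
    also have "\<dots> \<le> (\<Sum>i\<in>UNIV. \<Sum>j\<in>UNIV. \<bar>((if i = j then 1 else 0) - ?n $ i * ?n $ j) * Y $ j $ i\<bar>)"
      by (intro sum_mono sum_abs)
    also have "\<dots> \<le> (\<Sum>i\<in>UNIV. \<Sum>j\<in>UNIV. 2 * \<bar>Y $ j $ i\<bar>)"
      by (intro sum_mono, simp only: abs_mult, rule mult_right_mono[OF c], simp)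
    finally show ?thesis .
  qed
  then have "\<bar>a ((1/eps) *\<^sub>R y) * (\<Sum>i\<in>UNIV. \<Sum>j\<in>UNIV. ((if i = j then 1 else 0) - ?n $ i * ?n $ j) * Y $ j $ i)\<bar>
     \<le> \<bar>a ((1/eps) *\<^sub>R y)\<bar> * (\<Sum>i\<in>UNIV. \<Sum>j\<in>UNIV. 2 * \<bar>Y $ j $ i\<bar>)"
    by (simp add: abs_mult mult_left_mono)
  moreover have "\<bar>1/eps * (grad a ((1/eps) *\<^sub>R y) \<bullet> q)\<bar> = \<bar>1/eps\<bar> * \<bar>grad a ((1/eps) *\<^sub>R y) \<bullet> q\<bar>"
    by (simp add: abs_mult)
  ultimately show ?thesis unfolding gG_def gB_def geoG_def w by (simp add: abs_triangle_ineq order_trans[OF abs_triangle_ineq])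
qed


lemma cont_comp_scale:
  assumes "\<And>z. isCont f z"
  shows "isCont (\<lambda>w::(real^'d) \<times> (real^'d) \<times> (real^'d^'d). f ((1/eps) *\<^sub>R fst w)) w"
  by (rule isCont_o2[OF _ assms]) (intro continuous_intros)

lemma isCont_gB:
  assumes "\<And>z. isCont a z" "\<And>z. isCont (grad a) z"
  shows "isCont (gB a eps) w"
  unfolding gB_def[abs_def]
  by (intro continuous_intros cont_comp_scale assms)

lemma isCont_gG:
  assumes "\<And>z. isCont a z" "\<And>z. isCont (grad a) z" "fst (snd w) \<noteq> 0"
  shows "isCont (gG a eps) w"
  unfolding gG_def[abs_def] geoG_def
  using assms(3) by (intro continuous_intros cont_comp_scale assms) auto


lemma Glower_zero:
  assumes "\<And>z. isCont a z" "\<And>z. isCont (grad a) z"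
  shows "0 \<le> Glower a eps y 0 0"
proof -
  have c: "isCont (gB a eps) (y, 0, 0)" by (rule isCont_gB[OF assms])
  have t: "(gB a eps \<longlongrightarrow> 0) (at (y, 0, 0) within {w. fst (snd w) \<noteq> 0})"
  proof -
    have "(gB a eps \<longlongrightarrow> gB a eps (y, 0, 0)) (at (y, 0, 0))"
      using c unfolding isCont_def .
    then have "(gB a eps \<longlongrightarrow> gB a eps (y, 0, 0)) (at (y, 0, 0) within {w. fst (snd w) \<noteq> 0})"
      by (rule tendsto_within_subset) simp
    moreover have "gB a eps (y, 0, 0) = 0" by (simp add: gB_def)
    ultimately show ?thesis by simp
  qed
  show ?thesis unfolding Glower_gG
  proof (rule Liminf_ge_bound[OF t])
    fix w have "\<bar>gG a eps w\<bar> \<le> gB a eps w" by (rule gG_bound)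
    then show "- gB a eps w \<le> gG a eps w" by arith
  qed
qed

lemma Gupper_zero:
  assumes "\<And>z. isCont a z" "\<And>z. isCont (grad a) z"
  shows "Gupper a eps y 0 0 \<le> 0"
proof -
  have c: "isCont (gB a eps) (y, 0, 0)" by (rule isCont_gB[OF assms])
  have t: "(gB a eps \<longlongrightarrow> 0) (at (y, 0, 0) within {w. fst (snd w) \<noteq> 0})"
  proof -
    have "(gB a eps \<longlongrightarrow> gB a eps (y, 0, 0)) (at (y, 0, 0))"
      using c unfolding isCont_def .
    then have "(gB a eps \<longlongrightarrow> gB a eps (y, 0, 0)) (at (y, 0, 0) within {w. fst (snd w) \<noteq> 0})"
      by (rule tendsto_within_subset) simp
    moreover have "gB a eps (y, 0, 0) = 0" by (simp add: gB_def)
    ultimately show ?thesis by simp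
  qed
  show ?thesis unfolding Gupper_gG
  proof (rule Limsup_le_bound[OF t])
    fix w have "\<bar>gG a eps w\<bar> \<le> gB a eps w" by (rule gG_bound)
    then show "gG a eps w \<le> gB a eps w" by arith
  qed
qed

lemma tends_gG:
  assumes "\<And>z. isCont a z" "\<And>z. isCont (grad a) z" "p \<noteq> 0"
  shows "(gG a eps \<longlongrightarrow> geoG a eps y p X) (at (y, p, X) within {w. fst (snd w) \<noteq> 0})"
proof -
  have c: "isCont (gG a eps) (y, p, X)" by (rule isCont_gG[OF assms(1,2)]) (simp add: assms(3))
  have "(gG a eps \<longlongrightarrow> gG a eps (y, p, X)) (at (y, p, X))"
    using c unfolding isCont_def .
  then have "(gG a eps \<longlongrightarrow> gG a eps (y, p, X)) (at (y, p, X) within {w. fst (snd w) \<noteq> 0})"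
    by (rule tendsto_within_subset) simp
  then show ?thesis by (simp add: gG_def)
qed

lemma Glower_nz:
  assumes "\<And>z. isCont a z" "\<And>z. isCont (grad a) z" "p \<noteq> 0"
  shows "ereal (geoG a eps y p X) \<le> Glower a eps y p X"
  unfolding Glower_gG by (rule Liminf_ge_tendsto[OF tends_gG[OF assms]])

lemma Gupper_nz:
  assumes "\<And>z. isCont a z" "\<And>z. isCont (grad a) z" "p \<noteq> 0"
  shows "Gupper a eps y p X \<le> ereal (geoG a eps y p X)"
  unfolding Gupper_gG by (rule Limsup_le_tendsto[OF tends_gG[OF assms]])


lemma tr_formula:
  fixes v wv :: "real^'d"
  assumes N: "N = (\<Sum>i\<in>UNIV. v$i * v$i)" and nn: "\<And>i j. n$i * n$j = v$i * v$j / N" and "N \<noteq> 0"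
  shows "(\<Sum>i\<in>UNIV. \<Sum>j\<in>UNIV. ((if i = j then 1 else 0) - n$i * n$j) * (A * v$j * v$i + (if j = i then B * wv$i else 0)))
       = B * (\<Sum>i\<in>UNIV. (1 - v$i * v$i / N) * wv$i)"
proof -
  have e1: "(\<Sum>i\<in>UNIV. \<Sum>j\<in>UNIV. ((if i = j then 1 else 0) - n$i * n$j) * (A * v$j * v$i + (if j = i then B * wv$i else 0)))
     = (\<Sum>i\<in>UNIV. A * v$i * v$i + B * wv$i - (\<Sum>j\<in>UNIV. (v$i * v$j / N) * (A * v$j * v$i)) - v$i * v$i / N * B * wv$i)"
  proof (rule sum.cong[OF refl])
    fix i
    have "(\<Sum>j\<in>UNIV. ((if i = j then 1 else 0) - n$i * n$j) * (A * v$j * v$i + (if j = i then B * wv$i else 0)))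
      = (\<Sum>j\<in>UNIV. (if i = j then A * v$j * v$i + B * wv$i else 0) - (v$i * v$j / N) * (A * v$j * v$i) - (if j = i then v$i * v$j / N * B * wv$i else 0))"
      by (rule sum.cong[OF refl]) (auto simp: nn algebra_simps)
    also have "\<dots> = A * v$i * v$i + B * wv$i - (\<Sum>j\<in>UNIV. (v$i * v$j / N) * (A * v$j * v$i)) - v$i * v$i / N * B * wv$i"
      by (simp add: sum_subtractf sum.delta)
    finally show "(\<Sum>j\<in>UNIV. ((if i = j then 1 else 0) - n$i * n$j) * (A * v$j * v$i + (if j = i then B * wv$i else 0)))
      = A * v$i * v$i + B * wv$i - (\<Sum>j\<in>UNIV. (v$i * v$j / N) * (A * v$j * v$i)) - v$i * v$i / N * B * wv$i" .
  qed
  have e2: "(\<Sum>i\<in>UNIV. \<Sum>j\<in>UNIV. (v$i * v$j / N) * (A * v$j * v$i)) = A * N"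
  proof -
    have "(\<Sum>i\<in>UNIV. \<Sum>j\<in>UNIV. (v$i * v$j / N) * (A * v$j * v$i)) = A / N * ((\<Sum>i\<in>UNIV. v$i * v$i) * (\<Sum>j\<in>UNIV. v$j * v$j))"
      by (simp add: sum_product sum_distrib_left algebra_simps)
    then show ?thesis using \<open>N \<noteq> 0\<close> N by (simp add: field_simps)
  qed
  have "(\<Sum>i\<in>UNIV. A * v$i * v$i + B * wv$i - (\<Sum>j\<in>UNIV. (v$i * v$j / N) * (A * v$j * v$i)) - v$i * v$i / N * B * wv$i)
     = A * N + (\<Sum>i\<in>UNIV. B * wv$i) - A * N - (\<Sum>i\<in>UNIV. v$i * v$i / N * B * wv$i)"
    using e2 N by (simp add: sum_subtractf sum.distrib sum_distrib_left mult.assoc)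
  also have "\<dots> = B * (\<Sum>i\<in>UNIV. (1 - v$i * v$i / N) * wv$i)"
    by (simp add: sum_distrib_left sum_subtractf algebra_simps)
  finally show ?thesis using e1 by simp
qed

lemma normsq_vec: "norm (v::real^'d)^2 = (\<Sum>i\<in>UNIV. v$i * v$i)"
  by (simp add: power2_norm_eq_inner inner_vec_def)

lemma geoG_phi:
  fixes y v wv :: "real^'d"
  assumes "v \<noteq> 0" "c \<noteq> 0" "eps > 0"
  shows "geoG a eps y ((c/eps) *\<^sub>R v) (\<chi> i j. c2/eps^2 * v$i * v$j + (if i = j then c/eps^2 * wv$j else 0))
    = (c/eps^2) * (a ((1/eps) *\<^sub>R y) * (\<Sum>i\<in>UNIV. (1 - v$i * v$i / (\<Sum>k\<in>UNIV. v$k * v$k)) * wv$i)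
                   + grad a ((1/eps) *\<^sub>R y) \<bullet> v)"
proof -
  define N where "N = (\<Sum>k\<in>UNIV. v$k * v$k)"
  have nv: "norm v ^ 2 = N" unfolding N_def by (rule normsq_vec)
  have N0: "N \<noteq> 0" using assms(1) nv by auto
  define n where "n = ((c/eps) *\<^sub>R v) /\<^sub>R norm ((c/eps) *\<^sub>R v)"
  define k where "k = (c/eps) / norm ((c/eps) *\<^sub>R v)"
  have nk: "n$i = k * v$i" for i unfolding n_def k_def by (simp add: divide_inverse)
  have "(norm ((c/eps) *\<^sub>R v))^2 = (c/eps)^2 * N"
    using nv by (simp add: power_mult_distrib power_divide)
  then have k2: "k^2 = 1/N" unfolding k_def using assms(2,3) N0 by (simp add: power_divide)
  have nn: "n$i * n$j = v$i * v$j / N" for i j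
  proof -
    have "n$i * n$j = k^2 * (v$i * v$j)" by (simp add: nk power2_eq_square algebra_simps)
    then show ?thesis using k2 by simp
  qed
  have tr: "(\<Sum>i\<in>UNIV. \<Sum>j\<in>UNIV. ((if i = j then 1 else 0) - n$i * n$j) * (c2/eps^2 * v$j * v$i + (if j = i then c/eps^2 * wv$i else 0)))
       = c/eps^2 * (\<Sum>i\<in>UNIV. (1 - v$i * v$i / N) * wv$i)"
    by (rule tr_formula[OF N_def nn N0])
  have gr: "1/eps * (grad a ((1/eps) *\<^sub>R y) \<bullet> ((c/eps) *\<^sub>R v)) = c/eps^2 * (grad a ((1/eps) *\<^sub>R y) \<bullet> v)"
    by (simp add: power2_eq_square)
  show ?thesis
    unfolding geoG_def n_def[symmetric] N_def[symmetric] using tr gr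
    by (simp add: algebra_simps)
qed


lemma sin2_shift:
  assumes "m \<in> \<int>"
  shows "sin (pi * (x + m))^2 = sin (pi * x)^2"
proof -
  have s: "sin (pi * m) = 0" using assms sin_times_pi_eq_0[of m] by (simp add: mult.commute)
  have c: "cos (pi * m)^2 = 1" using s sin_cos_squared_add[of "pi * m"] by simp
  have "sin (pi * (x + m)) = sin (pi * x) * cos (pi * m)"
    by (simp add: distrib_left sin_add s)
  then show ?thesis using c by (simp add: power_mult_distrib)
qed

lemma Sf_shift:
  assumes "\<forall>i. n$i \<in> \<int>"
  shows "Sf (n + w) = Sf w"
  unfolding Sf_def using sin2_shift[of "n$_" "w$_"] assms by (simp add: add.commute)

lemma Sf_int:
  assumes "\<forall>i. n$i \<in> \<int>"
  shows "Sf n = 0"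
  using Sf_shift[OF assms, of 0] by (simp add: Sf_def)

lemma Sf_nonneg: "0 \<le> Sf z"
  unfolding Sf_def by (simp add: sum_nonneg)

lemma Sf_ge_term: "sin (pi * z$i)^2 \<le> Sf z"
  unfolding Sf_def by (rule member_le_sum) auto

lemma sin_quarter_sq: "sin (pi * (1/4))^2 = 1/2" "sin (pi * (-1/4))^2 = 1/2"
proof -
  have "sin (pi/4)^2 = 1/2" by (simp add: sin_45 power_divide)
  then show "sin (pi * (1/4))^2 = 1/2" "sin (pi * (-1/4))^2 = 1/2" by (simp_all add: power2_eq_square)
qed

lemma vf_nonzero:
  assumes "0 < Sf z" "Sf z < 1/2"
  shows "vf z \<noteq> 0"
proof
  assume v0: "vf z = 0"
  have t: "sin (pi * z$i)^2 = 0 \<or> sin (pi * z$i)^2 = 1" for i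
  proof -
    have "pi * sin (2 * pi * z$i) = 0" using v0 unfolding vf_def by (metis vec_lambda_beta zero_index)
    then have "sin (2 * (pi * z$i)) = 0" by (simp add: mult.assoc)
    then have "sin (pi * z$i) = 0 \<or> cos (pi * z$i) = 0" by (simp add: sin_double)
    moreover have "cos (pi * z$i) = 0 \<Longrightarrow> sin (pi * z$i)^2 = 1"
      using sin_cos_squared_add[of "pi * z$i"] by simp
    ultimately show ?thesis by auto
  qed
  show False
  proof (cases "\<exists>i. sin (pi * z$i)^2 = 1")
    case True
    then obtain i where "sin (pi * z$i)^2 = 1" by blast
    then show False using Sf_ge_term[of z i] assms by simp
  next
    case False
    then have "Sf z = 0" unfolding Sf_def using t by (simp add: sum.neutral)
    then show False using assms by simp
  qed
qed

lemma wv_bound: "\<bar>wv z $ i\<bar> \<le> 2 * pi^2"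
  unfolding wv_def by (simp add: abs_mult)

lemma bracket_le:
  fixes v wv :: "real^'d"
  assumes "A \<ge> 0" "\<And>i. \<bar>wv$i\<bar> \<le> 2 * pi^2" "v \<noteq> 0"
    and "2 * pi^2 * real CARD('d) * A + G \<le> 0"
  shows "A * (\<Sum>i\<in>UNIV. (1 - v$i * v$i / (\<Sum>k\<in>UNIV. v$k * v$k)) * wv$i) + G \<le> 0"
proof -
  define N where "N = (\<Sum>k\<in>UNIV. v$k * v$k)"
  have "N = norm v ^ 2" unfolding N_def by (simp add: normsq_vec)
  then have Npos: "N > 0" using assms(3) by simp
  have "(1 - v$i * v$i / N) * wv$i \<le> 2 * pi^2" for i
  proof -
    have "v$i * v$i \<le> N" unfolding N_def by (rule member_le_sum) auto
    then have a: "0 \<le> 1 - v$i * v$i / N" "1 - v$i * v$i / N \<le> 1" using Npos by (auto simp: field_simps)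
    have "(1 - v$i * v$i / N) * wv$i \<le> (1 - v$i * v$i / N) * \<bar>wv$i\<bar>"
      using a by (simp add: mult_left_mono)
    also have "\<dots> \<le> 1 * (2 * pi^2)"
      using a assms(2)[of i] by (intro mult_mono) auto
    finally show ?thesis by simp
  qed
  then have "(\<Sum>i\<in>UNIV. (1 - v$i * v$i / N) * wv$i) \<le> (\<Sum>i\<in>(UNIV::'d set). 2 * pi^2)"
    by (intro sum_mono)
  then have "(\<Sum>i\<in>UNIV. (1 - v$i * v$i / N) * wv$i) \<le> 2 * pi^2 * real CARD('d)" by (simp add: mult.commute)
  then have "A * (\<Sum>i\<in>UNIV. (1 - v$i * v$i / N) * wv$i) \<le> A * (2 * pi^2 * real CARD('d))"
    using assms(1) by (rule mult_left_mono)
  then show ?thesis using assms(4) unfolding N_def by (simp add: algebra_simps)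
qed

lemma isCont_grad:
  fixes a :: "real^'d \<Rightarrow> real"
  assumes "Ck 2 a"
  shows "isCont (grad a) z"
proof -
  have "continuous_on UNIV (pdiff (axis i 1) a)" for i :: 'd
  proof -
    have "Ck 1 (pdiff (axis i 1) a)" using assms by (simp add: numeral_2_eq_2)
    then show ?thesis by (rule Ck_cont)
  qed
  then have "continuous_on UNIV (\<lambda>y. \<chi> i. pdiff (axis i 1) a y)"
    by (intro continuous_on_vec_lambda)
  moreover have "grad a = (\<lambda>y. \<chi> i. pdiff (axis i 1) a y)"
    by (simp add: fun_eq_iff grad_def pdiff_def)
  ultimately show ?thesis by (simp add: continuous_on_eq_continuous_at)
qed

lemma isCont_Ck: "Ck k a \<Longrightarrow> isCont a z"
  using Ck_cont[of k a] by (simp add: continuous_on_eq_continuous_at)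


definition feat :: "(real^'d \<Rightarrow> real) \<Rightarrow> real \<Rightarrow> real \<Rightarrow> bool" where
  "feat a s1 s2 \<longleftrightarrow> 0 < s1 \<and> s1 < s2 \<and> s2 < 1/2 \<and>
     (\<forall>z. s1 \<le> Sf z \<and> Sf z \<le> s2 \<longrightarrow> 2 * pi^2 * real CARD('d) * a z + grad a z \<bullet> vf z \<le> 0)"

lemma h2_pos: "x > 0 \<Longrightarrow> h2 x > 0" by (simp add: h2_eq)
lemma h2_zero: "x \<le> 0 \<Longrightarrow> h2 x = 0" by (simp add: h2_eq)
lemma h1_zero: "x \<le> 0 \<Longrightarrow> h1 x = 0" by (simp add: h1_eq)
lemma h3_zero: "x \<le> 0 \<Longrightarrow> h3 x = 0" by (simp add: h3_eq)
lemma h3_nonneg: "0 \<le> h3 x" by (simp add: h3_eq)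
lemma h3_mono: "x \<le> y \<Longrightarrow> h3 x \<le> h3 y" by (simp add: h3_eq power_mono)

lemma phi_crit:
  fixes y :: "real^'d"
  assumes "Sf ((1/eps) *\<^sub>R y) \<le> s1"
  shows "Dx (phi eps c0 C s1 eta L) (y, s) = 0" "Dxx (phi eps c0 C s1 eta L) (y, s) = 0"
  using assms by (simp_all add: Dx_phi Dxx_phi h2_zero h1_zero vec_eq_iff)

lemma geo_phi_val:
  fixes a :: "real^'d \<Rightarrow> real" and y :: "real^'d" and C c0 eta L s :: real
  assumes f: "feat a s1 s2" and apos: "\<And>z. a z \<ge> 0" and eps: "eps > 0"
    and S: "s1 < Sf ((1/eps) *\<^sub>R y)" "Sf ((1/eps) *\<^sub>R y) \<le> s2" and C0: "C \<noteq> 0"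
  defines "c \<equiv> - C * h2 (Sf ((1/eps) *\<^sub>R y) - s1)"
  shows "Dx (phi eps c0 C s1 eta L) (y, s) \<noteq> 0"
    and "\<exists>B \<le> 0. geoG a eps y (Dx (phi eps c0 C s1 eta L) (y, s)) (Dxx (phi eps c0 C s1 eta L) (y, s)) = c / eps^2 * B"
proof -
  let ?z = "(1/eps) *\<^sub>R y"
  have s12: "0 < s1" "s2 < 1/2" using f by (auto simp: feat_def)
  have v0: "vf ?z \<noteq> 0" using S s12 by (intro vf_nonzero) auto
  have False: "c \<noteq> 0" using C0 h2_pos[of "Sf ?z - s1"] S unfolding c_def by auto
  show "Dx (phi eps c0 C s1 eta L) (y, s) \<noteq> 0"
    using v0 eps False unfolding Dx_phi c_def by auto
  show "\<exists>B \<le> 0. geoG a eps y (Dx (phi eps c0 C s1 eta L) (y, s)) (Dxx (phi eps c0 C s1 eta L) (y, s)) = c / eps^2 * B"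
  proof -
    have fe: "2 * pi^2 * real CARD('d) * a ?z + grad a ?z \<bullet> vf ?z \<le> 0"
      using f S unfolding feat_def by auto
    have br: "a ?z * (\<Sum>i\<in>UNIV. (1 - vf ?z $ i * vf ?z $ i / (\<Sum>k\<in>UNIV. vf ?z $ k * vf ?z $ k)) * wv ?z $ i) + grad a ?z \<bullet> vf ?z \<le> 0"
      by (rule bracket_le[OF apos wv_bound v0 fe])
    have "geoG a eps y (Dx (phi eps c0 C s1 eta L) (y, s)) (Dxx (phi eps c0 C s1 eta L) (y, s))
       = c / eps^2 * (a ?z * (\<Sum>i\<in>UNIV. (1 - vf ?z $ i * vf ?z $ i / (\<Sum>k\<in>UNIV. vf ?z $ k * vf ?z $ k)) * wv ?z $ i) + grad a ?z \<bullet> vf ?z)"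
      unfolding Dx_phi Dxx_phi c_def[symmetric]
      using geoG_phi[OF v0 False eps, of a y "- C * h1 (Sf ((1/eps) *\<^sub>R y) - s1)" "wv ?z"] by simp
    then show ?thesis using br by blast
  qed
qed

lemma Glower_phi:
  fixes a :: "real^'d \<Rightarrow> real" and y :: "real^'d"
  assumes f: "feat a s1 s2" and apos: "\<And>z. a z \<ge> 0" and eps: "eps > 0" and a2: "Ck 2 a"
    and C: "C > 0" and S: "Sf ((1/eps) *\<^sub>R y) \<le> s2"
  shows "0 \<le> Glower a eps y (Dx (phi eps c0 C s1 eta L) (y, s)) (Dxx (phi eps c0 C s1 eta L) (y, s))"
proof (cases "Sf ((1/eps) *\<^sub>R y) \<le> s1")
  case True
  then show ?thesis using phi_crit[OF True] Glower_zero[OF isCont_Ck[OF a2] isCont_grad[OF a2]] by simp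
next
  case False
  define c where "c = - C * h2 (Sf ((1/eps) *\<^sub>R y) - s1)"
  have cneg: "c < 0" using False C h2_pos[of "Sf ((1/eps) *\<^sub>R y) - s1"] unfolding c_def
    by (simp add: mult_pos_pos)
  have C0: "C \<noteq> 0" using C by simp
  have nz: "Dx (phi eps c0 C s1 eta L) (y, s) \<noteq> 0"
    by (rule geo_phi_val(1)[OF f apos eps _ S C0]) (use False in simp)
  have "\<exists>B \<le> 0. geoG a eps y (Dx (phi eps c0 C s1 eta L) (y, s)) (Dxx (phi eps c0 C s1 eta L) (y, s)) = c / eps^2 * B"
    unfolding c_def by (rule geo_phi_val(2)[OF f apos eps _ S C0]) (use False in simp)
  then obtain B where B: "B \<le> 0" "geoG a eps y (Dx (phi eps c0 C s1 eta L) (y, s)) (Dxx (phi eps c0 C s1 eta L) (y, s)) = c / eps^2 * B"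
    by blast
  have "0 \<le> c / eps^2 * B" using cneg B(1) by (intro mult_nonpos_nonpos) (auto intro: divide_nonpos_nonneg)
  then have "0 \<le> ereal (geoG a eps y (Dx (phi eps c0 C s1 eta L) (y, s)) (Dxx (phi eps c0 C s1 eta L) (y, s)))"
    using B(2) by simp
  also have "\<dots> \<le> Glower a eps y (Dx (phi eps c0 C s1 eta L) (y, s)) (Dxx (phi eps c0 C s1 eta L) (y, s))"
    by (rule Glower_nz[OF isCont_Ck[OF a2] isCont_grad[OF a2] nz])
  finally show ?thesis .
qed

lemma Gupper_phi:
  fixes a :: "real^'d \<Rightarrow> real" and y :: "real^'d"
  assumes f: "feat a s1 s2" and apos: "\<And>z. a z \<ge> 0" and eps: "eps > 0" and a2: "Ck 2 a"
    and C: "C < 0" and S: "Sf ((1/eps) *\<^sub>R y) \<le> s2"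
  shows "Gupper a eps y (Dx (phi eps c0 C s1 eta L) (y, s)) (Dxx (phi eps c0 C s1 eta L) (y, s)) \<le> 0"
proof (cases "Sf ((1/eps) *\<^sub>R y) \<le> s1")
  case True
  then show ?thesis using phi_crit[OF True] Gupper_zero[OF isCont_Ck[OF a2] isCont_grad[OF a2]] by simp
next
  case False
  define c where "c = - C * h2 (Sf ((1/eps) *\<^sub>R y) - s1)"
  have cpos: "c > 0" using False C h2_pos[of "Sf ((1/eps) *\<^sub>R y) - s1"] unfolding c_def
    by (simp add: mult_neg_pos)
  have C0: "C \<noteq> 0" using C by simp
  have nz: "Dx (phi eps c0 C s1 eta L) (y, s) \<noteq> 0"
    by (rule geo_phi_val(1)[OF f apos eps _ S C0]) (use False in simp)
  have "\<exists>B \<le> 0. geoG a eps y (Dx (phi eps c0 C s1 eta L) (y, s)) (Dxx (phi eps c0 C s1 eta L) (y, s)) = c / eps^2 * B"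
    unfolding c_def by (rule geo_phi_val(2)[OF f apos eps _ S C0]) (use False in simp)
  then obtain B where B: "B \<le> 0" "geoG a eps y (Dx (phi eps c0 C s1 eta L) (y, s)) (Dxx (phi eps c0 C s1 eta L) (y, s)) = c / eps^2 * B"
    by blast
  have "c / eps^2 * B \<le> 0" using cpos B(1) by (intro mult_nonneg_nonpos) auto
  have "Gupper a eps y (Dx (phi eps c0 C s1 eta L) (y, s)) (Dxx (phi eps c0 C s1 eta L) (y, s))
     \<le> ereal (geoG a eps y (Dx (phi eps c0 C s1 eta L) (y, s)) (Dxx (phi eps c0 C s1 eta L) (y, s)))"
    by (rule Gupper_nz[OF isCont_Ck[OF a2] isCont_grad[OF a2] nz])
  also have "\<dots> \<le> 0" using B(2) \<open>c / eps^2 * B \<le> 0\<close> by simp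
  finally show ?thesis .
qed


lemma phi_val: "phi eps c0 C s1 eta L (y, s) = c0 - C * h3 (Sf ((1/eps) *\<^sub>R y) - s1) + eta * exp (L * s)"
  by (simp add: phi_def)

lemma cube_mem:
  fixes n y :: "real^'d"
  shows "y \<in> cbox (\<chi> i. eps * n$i - eps/4) (\<chi> i. eps * n$i + eps/4) \<longleftrightarrow> (\<forall>i. \<bar>y$i - eps * n$i\<bar> \<le> eps/4)"
proof -
  have "(eps * n$i - eps/4 \<le> y$i \<and> y$i \<le> eps * n$i + eps/4) = (\<bar>y$i - eps * n$i\<bar> \<le> eps/4)" for i
    by (smt (verit))
  then show ?thesis unfolding mem_box_cart by simp
qed

lemma cube_bdry:
  fixes n y :: "real^'d"
  assumes "eps > 0" "\<forall>i. n$i \<in> \<int>"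
    and "y \<in> cbox (\<chi> i. eps * n$i - eps/4) (\<chi> i. eps * n$i + eps/4)"
    and "y \<notin> box (\<chi> i. eps * n$i - eps/4) (\<chi> i. eps * n$i + eps/4)"
  shows "Sf ((1/eps) *\<^sub>R y) \<ge> 1/2"
proof -
  obtain i where i: "y$i = eps * n$i - eps/4 \<or> y$i = eps * n$i + eps/4"
    using assms(3,4) unfolding mem_box_cart by (auto simp: not_less) (meson order.antisym)+
  define w where "w = (1/eps) *\<^sub>R y - n"
  have "Sf ((1/eps) *\<^sub>R y) = Sf (n + w)" unfolding w_def by simp
  also have "\<dots> = Sf w" by (rule Sf_shift[OF assms(2)])
  finally have e: "Sf ((1/eps) *\<^sub>R y) = Sf w" .
  have "w$i = -1/4 \<or> w$i = 1/4"
    using i assms(1) unfolding w_def by (auto simp: field_simps)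
  then have "pi * w$i = pi/4 \<or> pi * w$i = - (pi/4)" by auto
  then have "sin (pi * w$i)^2 = sin (pi/4)^2" by (elim disjE) (simp_all only: sin_minus power2_minus)
  moreover have "sin (pi/4)^2 = 1/2" by (simp add: sin_45 power_divide)
  ultimately have "sin (pi * w$i)^2 = 1/2" by simp
  then show ?thesis using e Sf_ge_term[of w i] by simp
qed

lemma barrier_lower:
  fixes tp :: real and a :: "real^'d \<Rightarrow> real" and v :: "real^'d \<Rightarrow> real \<Rightarrow> real" and n :: "real^'d"
  assumes f: "feat a s1 s2" and apos: "\<And>z. a z \<ge> 0" and a2: "Ck 2 a" and eps: "eps > 0"
    and sup: "visc_super a eps v"
    and cont: "continuous_on {w::(real^'d) \<times> real. snd w \<ge> 0} (\<lambda>w. v (fst w) (snd w))"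
    and nint: "\<forall>i. n$i \<in> \<int>" and t: "t > 0"
    and init: "\<And>y. (\<forall>i. \<bar>y$i - eps * n$i\<bar> \<le> eps/4) \<Longrightarrow> v y 0 \<ge> tp"
  shows "v (eps *\<^sub>R n) t \<ge> tp"
proof (rule ccontr)
  assume "\<not> v (eps *\<^sub>R n) t \<ge> tp"
  define y0 where "y0 = eps *\<^sub>R n"
  define \<gamma> where "\<gamma> = tp - v y0 t"
  have g: "\<gamma> > 0" using \<open>\<not> v (eps *\<^sub>R n) t \<ge> tp\<close> unfolding \<gamma>_def y0_def by simp
  have s12: "0 < s1" "s1 < s2" "s2 < 1/2" using f by (auto simp: feat_def)
  define lo where "lo = (\<chi> i. eps * n$i - eps/4)"
  define hi where "hi = (\<chi> i. eps * n$i + eps/4)"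
  define T where "T = t + 1"
  define K where "K = cbox lo hi \<times> {0..T}"
  have "y0 \<in> cbox lo hi" unfolding lo_def hi_def y0_def mem_box_cart using eps by simp
  then have y0K: "(y0, t) \<in> K" unfolding K_def T_def using t by simp
  have Kc: "compact K" unfolding K_def by (intro compact_Times compact_cbox compact_Icc)
  have KS: "K \<subseteq> {w. snd w \<ge> 0}" unfolding K_def by auto
  have cv: "continuous_on K (\<lambda>w. v (fst w) (snd w))" by (rule continuous_on_subset[OF cont KS])
  obtain wm where wm: "wm \<in> K" "\<And>w. w \<in> K \<Longrightarrow> v (fst wm) (snd wm) \<le> v (fst w) (snd w)"
    using continuous_attains_inf[OF Kc _ cv] y0K by blast
  define m where "m = v (fst wm) (snd wm)"
  have mK: "\<And>w. w \<in> K \<Longrightarrow> m \<le> v (fst w) (snd w)" unfolding m_def using wm by blast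
  have mt: "m < tp" using mK[OF y0K] g unfolding \<gamma>_def by simp
  define C where "C = (tp - m + 1) / (s2 - s1)^3"
  have Cpos: "C > 0" unfolding C_def using mt s12 by auto
  have Cs: "C * h3 (s2 - s1) = tp - m + 1" unfolding C_def h3_eq using s12 by simp
  define L where "L = max 1 (2 * (tp - m) / \<gamma>)"
  have L1: "L \<ge> 1" unfolding L_def by simp
  have L2: "\<gamma> / 2 * L \<ge> tp - m"
  proof -
    have "L \<ge> 2 * (tp - m) / \<gamma>" unfolding L_def by simp
    then have "\<gamma> / 2 * L \<ge> \<gamma> / 2 * (2 * (tp - m) / \<gamma>)" using g by (intro mult_left_mono) auto
    then show ?thesis using g by simp
  qed
  define \<eta> where "\<eta> = \<gamma> / (2 * exp (L * t))"
  have eta: "\<eta> > 0" unfolding \<eta>_def using g by simp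
  define \<phi> :: "(real^'d) \<times> real \<Rightarrow> real" where "\<phi> = phi eps tp C s1 (- \<eta>) L"
  define \<Phi> where "\<Phi> = (\<lambda>w. v (fst w) (snd w) - \<phi> w)"
  have phiv: "\<phi> (y, s) = tp - C * h3 (Sf ((1/eps) *\<^sub>R y) - s1) - \<eta> * exp (L * s)" for y s
    unfolding \<phi>_def phi_val by simp
  have c2: "Ck 2 \<phi>" unfolding \<phi>_def by (rule Ck2_phi)
  have cP: "continuous_on K \<Phi>" unfolding \<Phi>_def
    by (intro continuous_on_diff cv continuous_on_subset[OF Ck_cont[OF c2]]) auto
  obtain w1 where w1: "w1 \<in> K" "\<And>w. w \<in> K \<Longrightarrow> \<Phi> w1 \<le> \<Phi> w"
    using continuous_attains_inf[OF Kc _ cP] y0K by blast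
  obtain y1 \<tau> where w1e: "w1 = (y1, \<tau>)" by (cases w1)
  have "\<Phi> (y0, t) = - \<gamma> / 2"
  proof -
    have "(1/eps) *\<^sub>R y0 = n" unfolding y0_def using eps by simp
    then have "Sf ((1/eps) *\<^sub>R y0) = 0" using Sf_int[OF nint] by simp
    then have "\<phi> (y0, t) = tp - \<gamma> / 2" unfolding phiv \<eta>_def using s12 by (simp add: h3_zero)
    then show ?thesis unfolding \<Phi>_def \<gamma>_def by (simp add: field_simps)
  qed
  then have P1: "\<Phi> (y1, \<tau>) < 0" using w1(2)[OF y0K] g w1e by simp
  have y1Q: "y1 \<in> cbox lo hi" and tau: "0 \<le> \<tau>" "\<tau> \<le> T" using w1(1) w1e unfolding K_def by auto
  have Pge: "\<Phi> (y1, \<tau>) \<ge> m - tp + C * h3 (Sf ((1/eps) *\<^sub>R y1) - s1) + \<eta> * exp (L * \<tau>)"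
    using mK[OF w1(1)] w1e unfolding \<Phi>_def phiv by simp
  have big: "Sf ((1/eps) *\<^sub>R y1) < s2"
  proof (rule ccontr)
    assume "\<not> Sf ((1/eps) *\<^sub>R y1) < s2"
    then have "h3 (s2 - s1) \<le> h3 (Sf ((1/eps) *\<^sub>R y1) - s1)" by (intro h3_mono) simp
    then have "C * h3 (Sf ((1/eps) *\<^sub>R y1) - s1) \<ge> tp - m + 1" using Cs Cpos
      by (metis mult_left_mono less_imp_le)
    then show False using Pge P1 eta by (smt (verit) exp_gt_zero mult_pos_pos)
  qed
  have inbox: "y1 \<in> box lo hi"
  proof (rule ccontr)
    assume "y1 \<notin> box lo hi"
    then have "Sf ((1/eps) *\<^sub>R y1) \<ge> 1/2" using cube_bdry[OF eps nint] y1Q unfolding lo_def hi_def by blast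
    then show False using big s12 by simp
  qed
  have t0: "\<tau> \<noteq> 0"
  proof
    assume "\<tau> = 0"
    have "\<forall>i. \<bar>y1$i - eps * n$i\<bar> \<le> eps/4" using y1Q unfolding lo_def hi_def cube_mem .
    then have "v y1 0 \<ge> tp" by (rule init)
    moreover have "C * h3 (Sf ((1/eps) *\<^sub>R y1) - s1) \<ge> 0" using Cpos h3_nonneg by simp
    ultimately have "\<Phi> (y1, 0) > 0" unfolding \<Phi>_def phiv using eta by simp
    then show False using P1 \<open>\<tau> = 0\<close> by simp
  qed
  have tT: "\<tau> \<noteq> T"
  proof
    assume "\<tau> = T"
    have "\<eta> * exp (L * T) = \<gamma> / 2 * exp L"
      unfolding \<eta>_def T_def by (simp add: distrib_left exp_add)
    also have "\<dots> \<ge> \<gamma> / 2 * (1 + L)" using g by (intro mult_left_mono) auto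
    moreover have "\<gamma> / 2 * (1 + L) = \<gamma> / 2 + \<gamma> / 2 * L" by (simp add: algebra_simps)
    ultimately have "\<eta> * exp (L * T) > tp - m" using L2 g by linarith
    moreover have "C * h3 (Sf ((1/eps) *\<^sub>R y1) - s1) \<ge> 0" using Cpos h3_nonneg by simp
    ultimately show False using Pge P1 \<open>\<tau> = T\<close> by simp
  qed
  define U where "U = box lo hi \<times> {0<..<T}"
  have U: "open U" "(y1, \<tau>) \<in> U" "U \<subseteq> K"
    unfolding U_def K_def using inbox tau t0 tT by (auto intro!: open_Times simp: box_subset_cbox[THEN subsetD])
  have ev: "\<forall>\<^sub>F w in at (y1, \<tau>). v (fst w) (snd w) - \<phi> w \<ge> v y1 \<tau> - \<phi> (y1, \<tau>)"
  proof -
    have "\<forall>\<^sub>F w in nhds (y1, \<tau>). w \<in> U" by (rule eventually_nhds_in_open[OF U(1,2)])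
    then have "\<forall>\<^sub>F w in at (y1, \<tau>). w \<in> U" by (simp add: eventually_at_filter eventually_mono)
    then show ?thesis
    proof (rule eventually_mono)
      fix w assume "w \<in> U"
      then have "\<Phi> w1 \<le> \<Phi> w" using w1(2) U(3) by blast
      then show "v (fst w) (snd w) - \<phi> w \<ge> v y1 \<tau> - \<phi> (y1, \<tau>)" unfolding \<Phi>_def w1e by simp
    qed
  qed
  have tpos: "\<tau> > 0" using tau t0 by simp
  have "ereal (Dt \<phi> (y1, \<tau>)) \<ge> Glower a eps y1 (Dx \<phi> (y1, \<tau>)) (Dxx \<phi> (y1, \<tau>))"
    using sup c2 tpos ev unfolding visc_super_def by blast
  moreover have "0 \<le> Glower a eps y1 (Dx \<phi> (y1, \<tau>)) (Dxx \<phi> (y1, \<tau>))"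
    unfolding \<phi>_def by (rule Glower_phi[OF f apos eps a2 Cpos]) (use big in simp)
  moreover have "Dt \<phi> (y1, \<tau>) < 0" unfolding \<phi>_def Dt_phi using eta L1 by simp
  ultimately have "(0::ereal) \<le> ereal (Dt \<phi> (y1, \<tau>))" "Dt \<phi> (y1, \<tau>) < 0" 
    by (meson order_trans)+
  then show False by simp
qed

lemma barrier_upper:
  fixes tp :: real and a :: "real^'d \<Rightarrow> real" and v :: "real^'d \<Rightarrow> real \<Rightarrow> real" and n :: "real^'d"
  assumes f: "feat a s1 s2" and apos: "\<And>z. a z \<ge> 0" and a2: "Ck 2 a" and eps: "eps > 0"
    and sub: "visc_sub a eps v"
    and cont: "continuous_on {w::(real^'d) \<times> real. snd w \<ge> 0} (\<lambda>w. v (fst w) (snd w))"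
    and nint: "\<forall>i. n$i \<in> \<int>" and t: "t > 0"
    and init: "\<And>y. (\<forall>i. \<bar>y$i - eps * n$i\<bar> \<le> eps/4) \<Longrightarrow> v y 0 \<le> tp"
  shows "v (eps *\<^sub>R n) t \<le> tp"
proof (rule ccontr)
  assume "\<not> v (eps *\<^sub>R n) t \<le> tp"
  define y0 where "y0 = eps *\<^sub>R n"
  define \<gamma> where "\<gamma> = v y0 t - tp"
  have g: "\<gamma> > 0" using \<open>\<not> v (eps *\<^sub>R n) t \<le> tp\<close> unfolding \<gamma>_def y0_def by simp
  have s12: "0 < s1" "s1 < s2" "s2 < 1/2" using f by (auto simp: feat_def)
  define lo where "lo = (\<chi> i. eps * n$i - eps/4)"
  define hi where "hi = (\<chi> i. eps * n$i + eps/4)"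
  define T where "T = t + 1"
  define K where "K = cbox lo hi \<times> {0..T}"
  have "y0 \<in> cbox lo hi" unfolding lo_def hi_def y0_def mem_box_cart using eps by simp
  then have y0K: "(y0, t) \<in> K" unfolding K_def T_def using t by simp
  have Kc: "compact K" unfolding K_def by (intro compact_Times compact_cbox compact_Icc)
  have KS: "K \<subseteq> {w. snd w \<ge> 0}" unfolding K_def by auto
  have cv: "continuous_on K (\<lambda>w. v (fst w) (snd w))" by (rule continuous_on_subset[OF cont KS])
  obtain wm where wm: "wm \<in> K" "\<And>w. w \<in> K \<Longrightarrow> v (fst w) (snd w) \<le> v (fst wm) (snd wm)"
    using continuous_attains_sup[OF Kc _ cv] y0K by blast
  define m where "m = v (fst wm) (snd wm)"
  have mK: "\<And>w. w \<in> K \<Longrightarrow> v (fst w) (snd w) \<le> m" unfolding m_def using wm by blast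
  have mt: "tp < m" using mK[OF y0K] g unfolding \<gamma>_def by simp
  define C where "C = (m - tp + 1) / (s2 - s1)^3"
  have Cpos: "C > 0" unfolding C_def using mt s12 by auto
  have Cs: "C * h3 (s2 - s1) = m - tp + 1" unfolding C_def h3_eq using s12 by simp
  define L where "L = max 1 (2 * (m - tp) / \<gamma>)"
  have L1: "L \<ge> 1" unfolding L_def by simp
  have L2: "\<gamma> / 2 * L \<ge> m - tp"
  proof -
    have "L \<ge> 2 * (m - tp) / \<gamma>" unfolding L_def by simp
    then have "\<gamma> / 2 * L \<ge> \<gamma> / 2 * (2 * (m - tp) / \<gamma>)" using g by (intro mult_left_mono) auto
    then show ?thesis using g by simp
  qed
  define \<eta> where "\<eta> = \<gamma> / (2 * exp (L * t))"
  have eta: "\<eta> > 0" unfolding \<eta>_def using g by simp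
  define \<phi> :: "(real^'d) \<times> real \<Rightarrow> real" where "\<phi> = phi eps tp (- C) s1 \<eta> L"
  define \<Phi> where "\<Phi> = (\<lambda>w. v (fst w) (snd w) - \<phi> w)"
  have phiv: "\<phi> (y, s) = tp + C * h3 (Sf ((1/eps) *\<^sub>R y) - s1) + \<eta> * exp (L * s)" for y s
    unfolding \<phi>_def phi_val by simp
  have c2: "Ck 2 \<phi>" unfolding \<phi>_def by (rule Ck2_phi)
  have cP: "continuous_on K \<Phi>" unfolding \<Phi>_def
    by (intro continuous_on_diff cv continuous_on_subset[OF Ck_cont[OF c2]]) auto
  obtain w1 where w1: "w1 \<in> K" "\<And>w. w \<in> K \<Longrightarrow> \<Phi> w \<le> \<Phi> w1"
    using continuous_attains_sup[OF Kc _ cP] y0K by blast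
  obtain y1 \<tau> where w1e: "w1 = (y1, \<tau>)" by (cases w1)
  have "\<Phi> (y0, t) = \<gamma> / 2"
  proof -
    have "(1/eps) *\<^sub>R y0 = n" unfolding y0_def using eps by simp
    then have "Sf ((1/eps) *\<^sub>R y0) = 0" using Sf_int[OF nint] by simp
    then have "\<phi> (y0, t) = tp + \<gamma> / 2" unfolding phiv \<eta>_def using s12 by (simp add: h3_zero)
    then show ?thesis unfolding \<Phi>_def \<gamma>_def by (simp add: field_simps)
  qed
  then have P1: "\<Phi> (y1, \<tau>) > 0" using w1(2)[OF y0K] g w1e by simp
  have y1Q: "y1 \<in> cbox lo hi" and tau: "0 \<le> \<tau>" "\<tau> \<le> T" using w1(1) w1e unfolding K_def by auto
  have Pge: "\<Phi> (y1, \<tau>) \<le> m - tp - C * h3 (Sf ((1/eps) *\<^sub>R y1) - s1) - \<eta> * exp (L * \<tau>)"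
    using mK[OF w1(1)] w1e unfolding \<Phi>_def phiv by simp
  have big: "Sf ((1/eps) *\<^sub>R y1) < s2"
  proof (rule ccontr)
    assume "\<not> Sf ((1/eps) *\<^sub>R y1) < s2"
    then have "h3 (s2 - s1) \<le> h3 (Sf ((1/eps) *\<^sub>R y1) - s1)" by (intro h3_mono) simp
    then have "C * h3 (Sf ((1/eps) *\<^sub>R y1) - s1) \<ge> m - tp + 1" using Cs Cpos
      by (metis mult_left_mono less_imp_le)
    then show False using Pge P1 eta by (smt (verit) exp_gt_zero mult_pos_pos)
  qed
  have inbox: "y1 \<in> box lo hi"
  proof (rule ccontr)
    assume "y1 \<notin> box lo hi"
    then have "Sf ((1/eps) *\<^sub>R y1) \<ge> 1/2" using cube_bdry[OF eps nint] y1Q unfolding lo_def hi_def by blast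
    then show False using big s12 by simp
  qed
  have t0: "\<tau> \<noteq> 0"
  proof
    assume "\<tau> = 0"
    have "\<forall>i. \<bar>y1$i - eps * n$i\<bar> \<le> eps/4" using y1Q unfolding lo_def hi_def cube_mem .
    then have "v y1 0 \<le> tp" by (rule init)
    moreover have "C * h3 (Sf ((1/eps) *\<^sub>R y1) - s1) \<ge> 0" using Cpos h3_nonneg by simp
    ultimately have "\<Phi> (y1, 0) < 0" unfolding \<Phi>_def phiv using eta by simp
    then show False using P1 \<open>\<tau> = 0\<close> by simp
  qed
  have tT: "\<tau> \<noteq> T"
  proof
    assume "\<tau> = T"
    have "\<eta> * exp (L * T) = \<gamma> / 2 * exp L"
      unfolding \<eta>_def T_def by (simp add: distrib_left exp_add)
    also have "\<dots> \<ge> \<gamma> / 2 * (1 + L)" using g by (intro mult_left_mono) auto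
    moreover have "\<gamma> / 2 * (1 + L) = \<gamma> / 2 + \<gamma> / 2 * L" by (simp add: algebra_simps)
    ultimately have "\<eta> * exp (L * T) > m - tp" using L2 g by linarith
    moreover have "C * h3 (Sf ((1/eps) *\<^sub>R y1) - s1) \<ge> 0" using Cpos h3_nonneg by simp
    ultimately show False using Pge P1 \<open>\<tau> = T\<close> by simp
  qed
  define U where "U = box lo hi \<times> {0<..<T}"
  have U: "open U" "(y1, \<tau>) \<in> U" "U \<subseteq> K"
    unfolding U_def K_def using inbox tau t0 tT by (auto intro!: open_Times simp: box_subset_cbox[THEN subsetD])
  have ev: "\<forall>\<^sub>F w in at (y1, \<tau>). v (fst w) (snd w) - \<phi> w \<le> v y1 \<tau> - \<phi> (y1, \<tau>)"
  proof -
    have "\<forall>\<^sub>F w in nhds (y1, \<tau>). w \<in> U" by (rule eventually_nhds_in_open[OF U(1,2)])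
    then have "\<forall>\<^sub>F w in at (y1, \<tau>). w \<in> U" by (simp add: eventually_at_filter eventually_mono)
    then show ?thesis
    proof (rule eventually_mono)
      fix w assume "w \<in> U"
      then have "\<Phi> w \<le> \<Phi> w1" using w1(2) U(3) by blast
      then show "v (fst w) (snd w) - \<phi> w \<le> v y1 \<tau> - \<phi> (y1, \<tau>)" unfolding \<Phi>_def w1e by simp
    qed
  qed
  have tpos: "\<tau> > 0" using tau t0 by simp
  have "ereal (Dt \<phi> (y1, \<tau>)) \<le> Gupper a eps y1 (Dx \<phi> (y1, \<tau>)) (Dxx \<phi> (y1, \<tau>))"
    using sub c2 tpos ev unfolding visc_sub_def by blast
  moreover have "Gupper a eps y1 (Dx \<phi> (y1, \<tau>)) (Dxx \<phi> (y1, \<tau>)) \<le> 0"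
    unfolding \<phi>_def by (rule Gupper_phi[OF f apos eps a2]) (use big Cpos in simp_all)
  moreover have "Dt \<phi> (y1, \<tau>) > 0" unfolding \<phi>_def Dt_phi using eta L1 by simp
  ultimately have "ereal (Dt \<phi> (y1, \<tau>)) \<le> (0::ereal)" "Dt \<phi> (y1, \<tau>) > 0" 
    by (meson order_trans)+
  then show False by simp
qed


lemma grid_point:
  fixes x :: "real^'d"
  assumes e: "e > 0"
  obtains n :: "real^'d" where "\<forall>i. n$i \<in> \<int>" "\<forall>i. \<bar>e * n$i - x$i\<bar> \<le> e"
proof
  define n :: "real^'d" where "n = (\<chi> i. of_int \<lfloor>x$i / e\<rfloor>)"
  show "\<forall>i. n$i \<in> \<int>" unfolding n_def by simp
  show "\<forall>i. \<bar>e * n$i - x$i\<bar> \<le> e"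
  proof
    fix i
    have a: "of_int \<lfloor>x$i / e\<rfloor> \<le> x$i / e" "x$i / e < of_int \<lfloor>x$i / e\<rfloor> + 1"
      by linarith+
    have "e * of_int \<lfloor>x$i / e\<rfloor> \<le> x$i" using mult_left_mono[OF a(1), of e] e by simp
    moreover have "x$i < e * of_int \<lfloor>x$i / e\<rfloor> + e"
      using mult_strict_left_mono[OF a(2) e] e by (simp add: distrib_left)
    ultimately show "\<bar>e * n$i - x$i\<bar> \<le> e" unfolding n_def by simp
  qed
qed

lemma norm_le_sum_bound:
  fixes z :: "real^'d"
  assumes "\<forall>i. \<bar>z$i\<bar> \<le> c"
  shows "norm z \<le> real CARD('d) * c"
proof -
  have "norm z \<le> (\<Sum>i\<in>UNIV. \<bar>z$i\<bar>)" by (rule norm_le_l1_cart)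
  also have "\<dots> \<le> (\<Sum>i\<in>(UNIV::'d set). c)" using assms by (intro sum_mono) auto
  finally show ?thesis by simp
qed

lemma pin_core:
  fixes a :: "real^'d \<Rightarrow> real" and u0 :: "real^'d \<Rightarrow> real" and u :: "real \<Rightarrow> real^'d \<Rightarrow> real \<Rightarrow> real"
  assumes f: "feat a s1 s2" and apos: "\<And>z. a z \<ge> 0" and a2: "Ck 2 a"
    and uc: "continuous_on UNIV u0"
    and sol: "\<forall>eps>0. visc_solution a eps u0 (u eps)"
    and t: "t > 0" and r: "r > 0" and d: "\<delta> > 0"
  shows "\<exists>e y. 0 < e \<and> e < r \<and> norm (y - x) < r \<and> u e y t \<ge> u0 x - \<delta>"
    and "\<exists>e y. 0 < e \<and> e < r \<and> norm (y - x) < r \<and> u e y t \<le> u0 x + \<delta>"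
proof -
  obtain \<rho> where rho: "\<rho> > 0" "\<And>y. dist y x < \<rho> \<Longrightarrow> dist (u0 y) (u0 x) < \<delta>"
    using uc d unfolding continuous_on_iff by (meson UNIV_I)
  define D where "D = real CARD('d)"
  have D: "D \<ge> 1" unfolding D_def by (simp add: Suc_leI)
  define e where "e = min r \<rho> / (4 * D)"
  have e: "e > 0" unfolding e_def using r rho D by auto
  have e4: "4 * (D * e) = min r \<rho>" unfolding e_def using D by simp
  have De: "e \<le> D * e" using D e by simp
  have mr: "min r \<rho> \<le> r" "min r \<rho> \<le> \<rho>" by auto
  have er: "e < r" using e4 De mr e by linarith
  obtain n :: "real^'d" where n: "\<forall>i. n$i \<in> \<int>" "\<forall>i. \<bar>e * n$i - x$i\<bar> \<le> e"
    using grid_point[OF e] by blast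
  have y0x: "norm (e *\<^sub>R n - x) < r"
  proof -
    have "norm (e *\<^sub>R n - x) \<le> D * e" unfolding D_def using n(2) by (intro norm_le_sum_bound) simp
    also have "\<dots> < r" using e4 De mr e by linarith
    finally show ?thesis .
  qed
  have close: "\<bar>u0 y - u0 x\<bar> < \<delta>" if "\<forall>i. \<bar>y$i - e * n$i\<bar> \<le> e/4" for y
  proof -
    have "\<forall>i. \<bar>(y - x)$i\<bar> \<le> 2 * e"
    proof
      fix i
      have "(y - x)$i = (y$i - e * n$i) + (e * n$i - x$i)" by simp
      then have "\<bar>(y - x)$i\<bar> \<le> \<bar>y$i - e * n$i\<bar> + \<bar>e * n$i - x$i\<bar>" by (metis abs_triangle_ineq)
      moreover have "\<bar>y$i - e * n$i\<bar> \<le> e/4" "\<bar>e * n$i - x$i\<bar> \<le> e" using that n(2) by auto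
      ultimately show "\<bar>(y - x)$i\<bar> \<le> 2 * e" using e by linarith
    qed
    then have "norm (y - x) \<le> D * (2 * e)" unfolding D_def by (rule norm_le_sum_bound)
    also have "\<dots> < \<rho>" using e4 De mr e by linarith
    finally have "dist y x < \<rho>" by (simp add: dist_norm)
    then show ?thesis using rho(2) by (simp add: dist_real_def)
  qed
  have solE: "visc_solution a e u0 (u e)" using sol e by blast
  then have S: "visc_super a e (u e)" "visc_sub a e (u e)"
    "continuous_on {w :: (real^'d) \<times> real. snd w \<ge> 0} (\<lambda>w. u e (fst w) (snd w))"
    "\<And>y. u e y 0 = u0 y"
    unfolding visc_solution_def by auto
  have "u e (e *\<^sub>R n) t \<ge> u0 x - \<delta>"
  proof (rule barrier_lower[OF f apos a2 e S(1) S(3) n(1) t])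
    fix y assume "\<forall>i. \<bar>y$i - e * n$i\<bar> \<le> e/4"
    then show "u e y 0 \<ge> u0 x - \<delta>" using close S(4) by fastforce
  qed
  then show "\<exists>e y. 0 < e \<and> e < r \<and> norm (y - x) < r \<and> u e y t \<ge> u0 x - \<delta>"
    using e er y0x by blast
  have "u e (e *\<^sub>R n) t \<le> u0 x + \<delta>"
  proof (rule barrier_upper[OF f apos a2 e S(2) S(3) n(1) t])
    fix y assume "\<forall>i. \<bar>y$i - e * n$i\<bar> \<le> e/4"
    then show "u e y 0 \<le> u0 x + \<delta>" using close S(4) by fastforce
  qed
  then show "\<exists>e y. 0 < e \<and> e < r \<and> norm (y - x) < r \<and> u e y t \<le> u0 x + \<delta>"
    using e er y0x by blast
qed


lemma pin_hr:
  fixes a :: "real^'d \<Rightarrow> real" and u0 :: "real^'d \<Rightarrow> real" and u :: "real \<Rightarrow> real^'d \<Rightarrow> real \<Rightarrow> real"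
  assumes f: "feat a s1 s2" and apos: "\<And>z. a z \<ge> 0" and a2: "Ck 2 a"
    and uc: "continuous_on UNIV u0"
    and sol: "\<forall>eps>0. visc_solution a eps u0 (u eps)"
    and t: "t > 0"
  shows "hr_limsup u x t \<ge> ereal (u0 x)" "ereal (u0 x) \<ge> hr_liminf u x t"
proof -
  let ?S = "\<lambda>r. {(e, y, s). 0 < e \<and> e < r \<and> norm (y - x) + \<bar>s - t\<bar> < r}"
  let ?f = "\<lambda>w. ereal (u (fst w) (fst (snd w)) (snd (snd w)))"
  have lo: "\<exists>w\<in>?S r. y < ?f w" if r: "r > 0" and y: "y < ereal (u0 x)" for r y
  proof -
    obtain r' where r': "r' < u0 x" "y \<le> ereal r'"
    proof (cases y)
      case (real r0) then show ?thesis using that y by auto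
    next
      case PInf then show ?thesis using y by simp
    next
      case MInf then show ?thesis using that[of "u0 x - 1"] by simp
    qed
    have d: "(u0 x - r') / 2 > 0" using r' by simp
    obtain e y' where ey: "0 < e" "e < r" "norm (y' - x) < r" "u e y' t \<ge> u0 x - (u0 x - r') / 2"
      using pin_core(1)[OF f apos a2 uc sol t r d] by blast
    have "(e, y', t) \<in> ?S r" using ey by simp
    moreover have "y < ?f (e, y', t)"
    proof -
      have "r' < u e y' t" using ey(4) r'(1) by (simp add: field_simps)
      then have "ereal r' < ereal (u e y' t)" by simp
      with r'(2) have "y < ereal (u e y' t)" by (rule le_less_trans)
      then show ?thesis by simp
    qed
    ultimately show ?thesis by blast
  qed
  show "hr_limsup u x t \<ge> ereal (u0 x)"
    unfolding hr_limsup_def le_INF_iff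
  proof
    fix r :: real assume "r \<in> {0<..}"
    then show "ereal (u0 x) \<le> (SUP w\<in>?S r. ?f w)"
      unfolding le_SUP_iff using lo by auto
  qed
  have hi: "\<exists>w\<in>?S r. ?f w < y" if r: "r > 0" and y: "y > ereal (u0 x)" for r y
  proof -
    obtain r' where r': "r' > u0 x" "ereal r' \<le> y"
    proof (cases y)
      case (real r0) then show ?thesis using that y by auto
    next
      case MInf then show ?thesis using y by simp
    next
      case PInf then show ?thesis using that[of "u0 x + 1"] by simp
    qed
    have d: "(r' - u0 x) / 2 > 0" using r' by simp
    obtain e y' where ey: "0 < e" "e < r" "norm (y' - x) < r" "u e y' t \<le> u0 x + (r' - u0 x) / 2"
      using pin_core(2)[OF f apos a2 uc sol t r d] by blast
    have "(e, y', t) \<in> ?S r" using ey by simp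
    moreover have "?f (e, y', t) < y"
    proof -
      have "u e y' t < r'" using ey(4) r'(1) by (simp add: field_simps)
      then have "ereal (u e y' t) < ereal r'" by simp
      then have "ereal (u e y' t) < y" using r'(2) by (rule less_le_trans)
      then show ?thesis by simp
    qed
    ultimately show ?thesis by blast
  qed
  show "ereal (u0 x) \<ge> hr_liminf u x t"
    unfolding hr_liminf_def SUP_le_iff
  proof
    fix r :: real assume "r \<in> {0<..}"
    then show "(INF w\<in>?S r. ?f w) \<le> ereal (u0 x)"
      unfolding INF_le_iff using hi by auto
  qed
qed


definition Emb :: "real^'d \<Rightarrow> (real^'d) \<times> (real^'d)" where
  "Emb z = ((\<chi> i. cos (2 * pi * z$i)), (\<chi> i. sin (2 * pi * z$i)))"

lemma Emb_inner: "Emb z \<bullet> c = (\<Sum>i\<in>UNIV. cos (2 * pi * z$i) * (fst c)$i + sin (2 * pi * z$i) * (snd c)$i)"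
  unfolding Emb_def by (cases c) (simp add: inner_prod_def inner_vec_def sum.distrib)

lemma Ck_cos_lin: "Ck k (\<lambda>z::real^'d. cos (2 * pi * z$i))"
  by (intro Ck_comp[OF Rk_cos] Ck_linear bounded_linear_intros bl_nth_comp[OF bounded_linear_ident])

lemma Ck_sin_lin: "Ck k (\<lambda>z::real^'d. sin (2 * pi * z$i))"
  by (intro Ck_comp[OF Rk_sin] Ck_linear bounded_linear_intros bl_nth_comp[OF bounded_linear_ident])

lemma Ck_Emb_inner: "Ck k (\<lambda>z::real^'d. Emb z \<bullet> c)"
  unfolding Emb_inner
  by (intro Ck_sum Ck_add Ck_mult Ck_const Ck_cos_lin Ck_sin_lin) auto

lemma Ck_poly_Emb:
  assumes "real_polynomial_function P"
  shows "Ck k (\<lambda>z::real^'d. P (Emb z))"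
  using assms
proof (induction P rule: real_polynomial_function.induct)
  case (linear f)
  have "f (Emb z) = (\<Sum>b\<in>Basis. (Emb z \<bullet> b) * f b)" for z
  proof -
    have "f (Emb z) = f (\<Sum>b\<in>Basis. (Emb z \<bullet> b) *\<^sub>R b)" by (simp add: euclidean_representation)
    also have "\<dots> = (\<Sum>b\<in>Basis. (Emb z \<bullet> b) * f b)"
      using linear.hyps by (simp add: linear_sum linear_scale bounded_linear.linear)
    finally show ?thesis .
  qed
  moreover have "Ck k (\<lambda>z::real^'d. \<Sum>b\<in>Basis. (Emb z \<bullet> b) * f b)"
    by (intro Ck_sum Ck_mult Ck_Emb_inner Ck_const) auto
  ultimately show ?case by simp
next
  case (const c) then show ?case by (rule Ck_const)
next
  case (add f g) show ?case using add.IH by (rule Ck_add)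
next
  case (mult f g) show ?case using mult.IH by (rule Ck_mult)
qed

lemma cs_int: "m \<in> \<int> \<Longrightarrow> cos (2 * pi * m) = 1 \<and> sin (2 * pi * m) = 0"
  by (elim Ints_cases) simp

lemma cos_shift: "m \<in> \<int> \<Longrightarrow> cos (2 * pi * (x + m)) = cos (2 * pi * x)"
  by (simp add: distrib_left cos_add cs_int)

lemma sin_shift: "m \<in> \<int> \<Longrightarrow> sin (2 * pi * (x + m)) = sin (2 * pi * x)"
  by (simp add: distrib_left sin_add cs_int)

lemma Emb_shift: "\<forall>i. n$i \<in> \<int> \<Longrightarrow> Emb (z + n) = Emb z"
  unfolding Emb_def by (simp add: vec_eq_iff cos_shift sin_shift)

lemma Emb_eq: "Emb z = Emb z' \<Longrightarrow> \<forall>i. (z - z')$i \<in> \<int>"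
proof
  fix i assume e: "Emb z = Emb z'"
  have c: "cos (2 * pi * z$i) = cos (2 * pi * z'$i)" and s: "sin (2 * pi * z$i) = sin (2 * pi * z'$i)"
    using e unfolding Emb_def by (auto simp: vec_eq_iff)
  have "cos (2 * pi * z$i - 2 * pi * z'$i) = 1"
    unfolding cos_diff c s using sin_cos_squared_add[of "2 * pi * z'$i"] by (simp add: power2_eq_square)
  then obtain k :: int where "2 * pi * z$i - 2 * pi * z'$i = k * 2 * pi" by (auto simp: cos_one_2pi_int)
  then have "2 * pi * (z$i - z'$i) = 2 * pi * k" by (simp add: algebra_simps)
  then have "z$i - z'$i = k" by simp
  then show "(z - z')$i \<in> \<int>" by simp
qed


lemma frechet_periodic:
  fixes p :: "real^'d \<Rightarrow> real"
  assumes per: "zperiodic p" and d: "p differentiable (at z)" and n: "\<forall>i. n$i \<in> \<int>"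
  shows "frechet_derivative p (at (z + n)) = frechet_derivative p (at z)"
proof -
  have D: "(p has_derivative frechet_derivative p (at z)) (at z)" using d frechet_derivative_works by blast
  have tr: "((\<lambda>w. w - n) has_derivative (\<lambda>h. h)) (at (z + n))"
    by (rule derivative_eq_intros refl)+ simp
  have "((\<lambda>w. p (w - n)) has_derivative (\<lambda>h. frechet_derivative p (at z) h)) (at (z + n))"
    using has_derivative_compose[OF tr, of p] D by simp
  moreover have "(\<lambda>w. p (w - n)) = p"
  proof
    fix w
    have "\<forall>i. (- n)$i \<in> \<int>" using n by simp
    then have "p (w + (- n)) = p w" using per unfolding zperiodic_def by blast
    then show "p (w - n) = p w" by simp
  qed
  ultimately have "(p has_derivative frechet_derivative p (at z)) (at (z + n))" by simp
  then show ?thesis by (rule frechet_derivative_at[symmetric])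
qed

lemma grad_bound:
  fixes p :: "real^'d \<Rightarrow> real"
  assumes per: "zperiodic p" and p2: "Ck 2 p"
  obtains L where "L \<ge> 0" "\<And>z i. \<bar>grad p z $ i\<bar> \<le> L"
proof -
  define h where "h = (\<lambda>z. \<Sum>i\<in>UNIV. \<bar>pdiff (axis i 1) p z\<bar>)"
  have cg: "continuous_on UNIV (pdiff (axis i 1) p)" for i :: 'd
  proof -
    have "Ck 1 (pdiff (axis i 1) p)" using p2 by (simp add: numeral_2_eq_2)
    then show ?thesis by (rule Ck_cont)
  qed
  have ch: "continuous_on (cbox 0 1) h" unfolding h_def
    by (intro continuous_intros continuous_on_subset[OF cg]) auto
  obtain zm where zm: "zm \<in> cbox (0::real^'d) 1" "\<And>z. z \<in> cbox 0 1 \<Longrightarrow> h z \<le> h zm"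
  proof -
    have "(0::real^'d) \<in> cbox 0 1" by (simp add: mem_box_cart)
    then show ?thesis using continuous_attains_sup[OF compact_cbox _ ch] that by blast
  qed
  have diff: "p differentiable (at z)" for z using p2 by (simp add: numeral_2_eq_2)
  show ?thesis
  proof
    show "h zm \<ge> 0" unfolding h_def by (simp add: sum_nonneg)
    fix z :: "real^'d" and i
    define fl :: "real^'d" where "fl = (\<chi> i. of_int \<lfloor>z$i\<rfloor>)"
    define z' where "z' = z - fl"
    have z'c: "z' \<in> cbox 0 1" unfolding z'_def fl_def mem_box_cart
      by (auto simp: floor_le_iff) linarith
    have "z = z' + fl" unfolding z'_def by simp
    moreover have "\<forall>i. fl$i \<in> \<int>" unfolding fl_def by simp
    ultimately have "frechet_derivative p (at z) = frechet_derivative p (at z')"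
      using frechet_periodic[OF per diff] by metis
    then have "grad p z $ i = pdiff (axis i 1) p z'" by (simp add: grad_def pdiff_def)
    also have "\<bar>\<dots>\<bar> \<le> h z'" unfolding h_def by (rule member_le_sum[of i UNIV "\<lambda>i. \<bar>pdiff (axis i 1) p z'\<bar>"]) auto
    also have "\<dots> \<le> h zm" by (rule zm(2)[OF z'c])
    finally show "\<bar>grad p z $ i\<bar> \<le> h zm" .
  qed
qed

lemma vf_sq: "vf z \<bullet> vf z \<ge> 4 * pi^2 * Sf z * (1 - Sf z)"
proof -
  let ?s = "\<lambda>i. sin (pi * z$i)^2"
  have t: "vf z $ i * vf z $ i = 4 * pi^2 * (?s i * (1 - ?s i))" for i
  proof -
    have "sin (2 * pi * z$i) = 2 * sin (pi * z$i) * cos (pi * z$i)"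
      using sin_double[of "pi * z$i"] by (simp add: mult.assoc)
    then have "vf z $ i * vf z $ i = pi^2 * (4 * (sin (pi * z$i)^2 * cos (pi * z$i)^2))"
      unfolding vf_def by (simp add: power2_eq_square algebra_simps)
    then show ?thesis by (simp add: cos_squared_eq)
  qed
  have e: "vf z \<bullet> vf z = (\<Sum>i\<in>UNIV. 4 * pi^2 * (?s i * (1 - ?s i)))"
    unfolding inner_vec_def using t by simp
  have le: "(\<Sum>i\<in>UNIV. 4 * pi^2 * (?s i * (1 - Sf z))) \<le> (\<Sum>i\<in>UNIV. 4 * pi^2 * (?s i * (1 - ?s i)))"
  proof (rule sum_mono)
    fix i
    have "?s i * (1 - Sf z) \<le> ?s i * (1 - ?s i)"
      using Sf_ge_term[of z i] by (intro mult_left_mono) auto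
    then show "4 * pi^2 * (?s i * (1 - Sf z)) \<le> 4 * pi^2 * (?s i * (1 - ?s i))" by simp
  qed
  have "(\<Sum>i\<in>UNIV. 4 * pi^2 * (?s i * (1 - Sf z))) = 4 * pi^2 * Sf z * (1 - Sf z)"
    unfolding Sf_def by (simp add: sum_distrib_left sum_distrib_right mult.assoc)
  then show ?thesis using e le by simp
qed

lemma vf_comp_bound: "\<bar>vf z $ i\<bar> \<le> pi"
  unfolding vf_def by (simp add: abs_mult)

lemma cos_half: "\<bar>x::real\<bar> \<le> 1 \<Longrightarrow> cos x \<ge> 1/2"
proof -
  assume x: "\<bar>x\<bar> \<le> 1"
  have "cos (pi/3) \<le> cos \<bar>x\<bar>" using x pi_gt3 by (intro cos_monotone_0_pi_le) auto
  then show ?thesis by (cases "x \<ge> 0") (simp_all add: cos_60)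
qed


lemma hd_bump:
  "((\<lambda>z::real^'d. cf * sin (lam * (1/4 - Sf z))) has_derivative
     (\<lambda>h. - (cf * lam * cos (lam * (1/4 - Sf z))) * (vf z \<bullet> h))) (at z)"
  by (rule has_derivative_eq_rhs, (rule derivative_eq_intros hd_Sf refl)+) (auto simp: fun_eq_iff algebra_simps)

lemma feat_construct:
  fixes p :: "real^'d \<Rightarrow> real" and \<sigma> \<Lambda> :: real
  assumes per: "zperiodic p" and sm: "smooth_fun p" and bnd: "\<And>z. 1 + \<sigma> \<le> p z \<and> p z \<le> \<Lambda> - \<sigma>"
    and sg: "\<sigma> > 0"
  obtains a where "zperiodic a" "smooth_fun a" "\<forall>x. a x \<in> {1..\<Lambda>}" "\<exists>s1 s2. feat a s1 s2"
    "\<forall>x. \<bar>a x - p x\<bar> \<le> \<sigma>"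
proof -
  have p2: "Ck 2 p" using sm unfolding smooth_fun_def by blast
  obtain L where L: "L \<ge> 0" "\<And>z i. \<bar>grad p z $ i\<bar> \<le> L" using grad_bound[OF per p2] by blast
  define D where "D = real CARD('d)"
  have D: "D \<ge> 1" unfolding D_def by (simp add: Suc_leI)
  define lam where "lam = max 8 ((2 * pi^2 * D * \<Lambda> + D * L * pi) / \<sigma>)"
  have lam8: "lam \<ge> 8" unfolding lam_def by simp
  have lamb: "\<sigma> * lam \<ge> 2 * pi^2 * D * \<Lambda> + D * L * pi"
  proof -
    have "lam \<ge> (2 * pi^2 * D * \<Lambda> + D * L * pi) / \<sigma>" unfolding lam_def by simp
    then have "\<sigma> * lam \<ge> \<sigma> * ((2 * pi^2 * D * \<Lambda> + D * L * pi) / \<sigma>)" using sg by (intro mult_left_mono) auto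
    then show ?thesis using sg by simp
  qed
  define a where "a = (\<lambda>z. p z + \<sigma> * sin (lam * (1/4 - Sf z)))"
  have per_a: "zperiodic a"
    unfolding zperiodic_def a_def
  proof (intro allI impI)
    fix x z :: "real^'d" assume z: "\<forall>i. z$i \<in> \<int>"
    have "p (x + z) = p x" using per z unfolding zperiodic_def by blast
    moreover have "Sf (x + z) = Sf x" using Sf_shift[OF z, of x] by (simp add: add.commute)
    ultimately show "p (x + z) + \<sigma> * sin (lam * (1/4 - Sf (x + z))) = p x + \<sigma> * sin (lam * (1/4 - Sf x))" by simp
  qed
  have sm_a: "smooth_fun a"
    unfolding smooth_fun_def
  proof
    fix k
    have "Ck k (\<lambda>z::real^'d. p z + \<sigma> * sin (lam * (1/4 + (-1) * Sf z)))"
      using sm unfolding smooth_fun_def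
      by (intro Ck_add Ck_mult Ck_const Ck_comp[OF Rk_sin] Ck_Sf_lin[OF bounded_linear_ident]) auto
    then show "Ck k a" unfolding a_def by simp
  qed
  have close: "\<forall>x. \<bar>a x - p x\<bar> \<le> \<sigma>"
  proof
    fix x :: "real^'d"
    have "\<bar>\<sigma> * sin (lam * (1/4 - Sf x))\<bar> \<le> \<sigma> * 1" unfolding abs_mult using sg
      by (intro mult_mono) auto
    then show "\<bar>a x - p x\<bar> \<le> \<sigma>" unfolding a_def by simp
  qed
  have range: "\<forall>x. a x \<in> {1..\<Lambda>}"
  proof
    fix x :: "real^'d"
    have "\<bar>a x - p x\<bar> \<le> \<sigma>" using close by blast
    then show "a x \<in> {1..\<Lambda>}" using bnd[of x] by (auto simp: abs_le_iff)
  qed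
  define s1 where "s1 = 1/4 - 1/lam"
  define s2 where "s2 = 1/4 + 1/lam"
  have il: "1/lam \<le> 1/8" "1/lam > 0" using lam8 by (auto simp: divide_simps)
  have feat: "feat a s1 s2"
    unfolding feat_def
  proof (intro conjI allI impI)
    show "0 < s1" unfolding s1_def using il by linarith
    show "s1 < s2" unfolding s1_def s2_def using il by linarith
    show "s2 < 1/2" unfolding s2_def using il by linarith
    fix z :: "real^'d" assume S: "s1 \<le> Sf z \<and> Sf z \<le> s2"
    let ?c = "cos (lam * (1/4 - Sf z))"
    have diffp: "(p has_derivative frechet_derivative p (at z)) (at z)"
      using p2 by (simp add: numeral_2_eq_2 frechet_derivative_works[symmetric])
    have ha: "(a has_derivative (\<lambda>h. frechet_derivative p (at z) h + - (\<sigma> * lam * ?c) * (vf z \<bullet> h))) (at z)"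
      unfolding a_def by (rule has_derivative_add[OF diffp hd_bump])
    have ga: "grad a z = grad p z + (- (\<sigma> * lam * ?c)) *\<^sub>R vf z"
      unfolding grad_def frechet_derivative_at[OF ha, symmetric]
      by (simp add: vec_eq_iff inner_axis)
    have gv: "grad a z \<bullet> vf z = grad p z \<bullet> vf z - \<sigma> * lam * ?c * (vf z \<bullet> vf z)"
      unfolding ga by (simp add: inner_diff_left)
    have arg: "\<bar>lam * (1/4 - Sf z)\<bar> \<le> 1"
    proof -
      have "\<bar>1/4 - Sf z\<bar> \<le> 1/lam" using S unfolding s1_def s2_def by auto
      then have "lam * \<bar>1/4 - Sf z\<bar> \<le> lam * (1/lam)" using lam8 by (intro mult_left_mono) auto
      then show ?thesis using lam8 by (simp add: abs_mult)
    qed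
    have c: "?c \<ge> 1/2" by (rule cos_half[OF arg])
    have SS: "1/8 \<le> Sf z" "Sf z \<le> 3/8" using S il unfolding s1_def s2_def by linarith+
    have vv: "vf z \<bullet> vf z \<ge> 2"
    proof -
      have "(Sf z - 1/8) * (7/8 - Sf z) \<ge> 0" using SS by (intro mult_nonneg_nonneg) auto
      moreover have "(Sf z - 1/8) * (7/8 - Sf z) = Sf z * (1 - Sf z) - 7/64" by (simp add: field_simps)
      ultimately have "Sf z * (1 - Sf z) \<ge> 7/64" by linarith
      moreover have "pi^2 \<ge> 9"
      proof -
        have "(3::real)^2 \<le> pi^2" using pi_gt3 by (intro power_mono) auto
        then show ?thesis by simp
      qed
      ultimately have "4 * pi^2 * (Sf z * (1 - Sf z)) \<ge> 4 * 9 * (7/64)"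
        by (intro mult_mono) auto
      moreover have "vf z \<bullet> vf z \<ge> 4 * pi^2 * (Sf z * (1 - Sf z))"
        using vf_sq[of z] by (simp only: mult.assoc)
      ultimately show ?thesis by linarith
    qed
    have gp: "grad p z \<bullet> vf z \<le> D * L * pi"
    proof -
      have "grad p z \<bullet> vf z \<le> (\<Sum>i\<in>UNIV. \<bar>grad p z $ i\<bar> * \<bar>vf z $ i\<bar>)"
        unfolding inner_vec_def by (intro sum_mono) (simp add: abs_mult[symmetric])
      also have "\<dots> \<le> (\<Sum>i\<in>(UNIV::'d set). L * pi)"
        by (intro sum_mono mult_mono L vf_comp_bound) auto
      finally show ?thesis unfolding D_def by (simp add: mult.commute mult.left_commute)
    qed
    have az: "a z \<le> \<Lambda>" using range by auto
    have t1: "\<sigma> * lam * ?c * (vf z \<bullet> vf z) \<ge> \<sigma> * lam * (1/2) * 2"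
      using c vv sg lam8 by (intro mult_mono) auto
    have t2: "2 * pi^2 * D * a z \<le> 2 * pi^2 * D * \<Lambda>" using az D by (intro mult_left_mono) auto
    show "2 * pi^2 * real CARD('d) * a z + grad a z \<bullet> vf z \<le> 0"
      unfolding gv D_def[symmetric] using t1 t2 gp lamb by linarith
  qed
  show ?thesis by (rule that[OF per_a sm_a range _ close]) (use feat in blast)
qed


lemma cont_Emb: "continuous_on UNIV (Emb :: real^'d \<Rightarrow> _)"
  unfolding Emb_def by (intro continuous_intros)

lemma floor_vec:
  fixes z :: "real^'d"
  obtains z' fl where "z' \<in> cbox 0 1" "\<forall>i. fl$i \<in> \<int>" "z = z' + fl"
proof
  define fl :: "real^'d" where "fl = (\<chi> i. of_int \<lfloor>z$i\<rfloor>)"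
  show "z - fl \<in> cbox 0 1" unfolding fl_def mem_box_cart
    by (auto simp: floor_le_iff) linarith
  show "\<forall>i. fl$i \<in> \<int>" unfolding fl_def by simp
  show "z = (z - fl) + fl" by simp
qed

lemma dense_smooth:
  fixes g :: "real^'d \<Rightarrow> real"
  assumes per: "zperiodic g" and cg: "continuous_on UNIV g" and e: "\<eta> > 0"
  obtains p where "zperiodic p" "smooth_fun p" "\<And>x. \<bar>p x - g x\<bar> < \<eta>"
proof -
  define Q where "Q = cbox (0::real^'d) 1"
  define T where "T = Emb ` Q"
  have cQ: "compact Q" unfolding Q_def by simp
  have cT: "compact T" unfolding T_def by (intro compact_continuous_image continuous_on_subset[OF cont_Emb] cQ) auto
  have rep: "\<exists>z'\<in>Q. Emb z' = Emb z \<and> g z' = g z" for z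
  proof -
    obtain z' fl where z': "z' \<in> cbox 0 1" "\<forall>i. fl$i \<in> \<int>" "z = z' + fl" by (rule floor_vec)
    have "Emb z = Emb z'" using Emb_shift[OF z'(2)] z'(3) by simp
    moreover have "g z = g z'" using per z'(2,3) unfolding zperiodic_def by blast
    ultimately show ?thesis using z'(1) unfolding Q_def by auto
  qed
  have same: "g z' = g z" if "Emb z' = Emb z" for z z'
  proof -
    have "\<forall>i. (z' - z)$i \<in> \<int>" by (rule Emb_eq[OF that])
    then have "g (z + (z' - z)) = g z" using per unfolding zperiodic_def by blast
    then show ?thesis by simp
  qed
  define G where "G = (\<lambda>q. g (SOME z. z \<in> Q \<and> Emb z = q))"
  have GE: "G (Emb z) = g z" for z
  proof -
    have ex: "\<exists>z'. z' \<in> Q \<and> Emb z' = Emb z" using rep by blast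
    have "(SOME z'. z' \<in> Q \<and> Emb z' = Emb z) \<in> Q \<and> Emb (SOME z'. z' \<in> Q \<and> Emb z' = Emb z) = Emb z"
      using someI_ex[OF ex] .
    then show ?thesis unfolding G_def using same by blast
  qed
  have contG: "continuous_on T G"
  proof -
    have clT: "closed T" using cT by (rule compact_imp_closed)
    show ?thesis unfolding continuous_on_closed_vimage[OF clT]
    proof (intro allI impI)
      fix B :: "real set" assume B: "closed B"
      have eq: "G -` B \<inter> T = Emb ` (Q \<inter> g -` B)"
      proof
        show "G -` B \<inter> T \<subseteq> Emb ` (Q \<inter> g -` B)"
          unfolding T_def using GE by auto
        show "Emb ` (Q \<inter> g -` B) \<subseteq> G -` B \<inter> T"
          unfolding T_def using GE by auto
      qed
      have "\<And>x. isCont g x" using cg by (simp add: continuous_on_eq_continuous_at)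
      then have "closed (g -` B)" by (rule continuous_closed_vimage[OF B])
      then have "compact (Q \<inter> g -` B)" using cQ by (intro compact_Int_closed)
      then have "compact (Emb ` (Q \<inter> g -` B))"
        by (intro compact_continuous_image continuous_on_subset[OF cont_Emb]) auto
      then show "closed (G -` B \<inter> T)" unfolding eq by (rule compact_imp_closed)
    qed
  qed
  obtain P where P: "real_polynomial_function P" "\<And>q. q \<in> T \<Longrightarrow> \<bar>G q - P q\<bar> < \<eta>"
    using Stone_Weierstrass_real_polynomial_function[OF cT contG e] by blast
  define p where "p = (\<lambda>z. P (Emb z))"
  show ?thesis
  proof
    show "zperiodic p" unfolding zperiodic_def p_def using Emb_shift by (simp add: add.commute) (metis add.commute Emb_shift)
    show "smooth_fun p" unfolding smooth_fun_def p_def using Ck_poly_Emb[OF P(1)] by blast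
    fix x
    obtain z' where z': "z' \<in> Q" "Emb z' = Emb x" using rep by blast
    have "Emb x \<in> T" unfolding T_def using imageI[OF z'(1), of Emb] z'(2) by simp
    then have "\<bar>G (Emb x) - P (Emb x)\<bar> < \<eta>" by (rule P(2))
    then show "\<bar>p x - g x\<bar> < \<eta>" unfolding p_def GE by simp
  qed
qed


lemma density_step:
  fixes g :: "real^'d \<Rightarrow> real" and \<Lambda> \<delta> :: real
  assumes L: "\<Lambda> > 1" and per: "zperiodic g" and cg: "continuous_on UNIV g" and rg: "\<forall>x. g x \<in> {1..\<Lambda>}"
    and d: "\<delta> > 0"
  obtains a where "zperiodic a" "smooth_fun a" "\<forall>x. a x \<in> {1..\<Lambda>}" "\<exists>s1 s2. feat a s1 s2"
    "\<forall>x. \<bar>a x - g x\<bar> < \<delta>"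
proof -
  define \<theta> where "\<theta> = min 1 (\<delta> / (\<Lambda> - 1))"
  have th: "0 < \<theta>" "\<theta> \<le> 1" "\<theta> * (\<Lambda> - 1) \<le> \<delta>"
  proof -
    show "0 < \<theta>" "\<theta> \<le> 1" unfolding \<theta>_def using d L by auto
    have "\<theta> \<le> \<delta> / (\<Lambda> - 1)" unfolding \<theta>_def by simp
    then show "\<theta> * (\<Lambda> - 1) \<le> \<delta>" using L by (simp add: field_simps)
  qed
  define m0 where "m0 = \<theta> * (\<Lambda> - 1) / 2"
  have m0: "m0 > 0" "2 * m0 \<le> \<delta>" unfolding m0_def using th L by auto
  define c where "c = (1 + \<Lambda>) / 2"
  define g1 where "g1 = (\<lambda>x. c + (1 - \<theta>) * (g x - c))"
  have per1: "zperiodic g1" using per unfolding zperiodic_def g1_def by simp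
  have cg1: "continuous_on UNIV g1" unfolding g1_def by (intro continuous_intros cg)
  have g1r: "1 + m0 \<le> g1 x \<and> g1 x \<le> \<Lambda> - m0" for x
  proof -
    have "1 \<le> g x" "g x \<le> \<Lambda>" using rg by auto
    then have a: "- ((\<Lambda> - 1) / 2) \<le> g x - c" "g x - c \<le> (\<Lambda> - 1) / 2" unfolding c_def by (auto simp: field_simps)
    have "(1 - \<theta>) * (g x - c) \<le> (1 - \<theta>) * ((\<Lambda> - 1) / 2)" using a th by (intro mult_left_mono) auto
    moreover have "(1 - \<theta>) * (- ((\<Lambda> - 1) / 2)) \<le> (1 - \<theta>) * (g x - c)" using a th by (intro mult_left_mono) auto
    ultimately show ?thesis unfolding g1_def m0_def c_def by (auto simp: field_simps)
  qed
  have g1g: "\<bar>g1 x - g x\<bar> \<le> m0" for x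
  proof -
    have "1 \<le> g x" "g x \<le> \<Lambda>" using rg by auto
    then have "\<bar>g x - c\<bar> \<le> (\<Lambda> - 1) / 2" unfolding c_def by (auto simp: abs_le_iff field_simps)
    then have "\<theta> * \<bar>g x - c\<bar> \<le> \<theta> * ((\<Lambda> - 1) / 2)" using th by (intro mult_left_mono) auto
    moreover have "g1 x - g x = - \<theta> * (g x - c)" unfolding g1_def by (simp add: algebra_simps)
    ultimately show ?thesis unfolding m0_def using th by (simp add: abs_mult)
  qed
  have m02: "m0 / 2 > 0" using m0 by simp
  obtain p where p: "zperiodic p" "smooth_fun p" "\<And>x. \<bar>p x - g1 x\<bar> < m0 / 2"
    using dense_smooth[OF per1 cg1 m02] by blast
  have pb: "1 + m0 / 2 \<le> p z \<and> p z \<le> \<Lambda> - m0 / 2" for z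
    using p(3)[of z] g1r[of z] unfolding abs_less_iff by linarith
  obtain a where a: "zperiodic a" "smooth_fun a" "\<forall>x. a x \<in> {1..\<Lambda>}" "\<exists>s1 s2. feat a s1 s2"
    "\<forall>x. \<bar>a x - p x\<bar> \<le> m0 / 2"
    using feat_construct[OF p(1,2) pb m02] by blast
  show ?thesis
  proof (rule that[OF a(1-4)])
    show "\<forall>x. \<bar>a x - g x\<bar> < \<delta>"
    proof
      fix x
      have "\<bar>a x - p x\<bar> \<le> m0 / 2" using a(5) by blast
      moreover have "\<bar>p x - g1 x\<bar> < m0 / 2" by (rule p(3))
      moreover have "\<bar>g1 x - g x\<bar> \<le> m0" by (rule g1g)
      ultimately show "\<bar>a x - g x\<bar> < \<delta>" using m0 by linarith
    qed
  qed
qed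


theorem corollary1p2:
  fixes \<Lambda> :: real
  assumes "CARD('d) \<ge> 2" and "\<Lambda> > 1"
  shows "\<exists>\<F> :: (real^'d \<Rightarrow> real) set.
     (\<forall>a\<in>\<F>. zperiodic a \<and> smooth_fun a \<and> (\<forall>x. a x \<in> {1..\<Lambda>})) \<and>
     (\<forall>g. zperiodic g \<and> continuous_on UNIV g \<and> (\<forall>x. g x \<in> {1..\<Lambda>}) \<longrightarrow>
        (\<forall>\<delta>>0. \<exists>a\<in>\<F>. \<forall>x. \<bar>a x - g x\<bar> < \<delta>)) \<and>
     (\<forall>a\<in>\<F>. \<forall>u0 :: real^'d \<Rightarrow> real. \<forall>u :: real \<Rightarrow> real^'d \<Rightarrow> real \<Rightarrow> real.
        uniformly_continuous_on UNIV u0 \<and> (\<forall>eps>0. visc_solution a eps u0 (u eps)) \<longrightarrow>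
        (\<forall>x. \<forall>t>0. hr_limsup u x t \<ge> ereal (u0 x) \<and> ereal (u0 x) \<ge> hr_liminf u x t))"
proof -
  define F :: "(real^'d \<Rightarrow> real) set" where
    "F = {a. zperiodic a \<and> smooth_fun a \<and> (\<forall>x. a x \<in> {1..\<Lambda>}) \<and> (\<exists>s1 s2. feat a s1 s2)}"
  have A: "\<forall>a\<in>F. zperiodic a \<and> smooth_fun a \<and> (\<forall>x. a x \<in> {1..\<Lambda>})" unfolding F_def by blast
  have B: "\<forall>g. zperiodic g \<and> continuous_on UNIV g \<and> (\<forall>x. g x \<in> {1..\<Lambda>}) \<longrightarrow>
        (\<forall>\<delta>>0. \<exists>a\<in>F. \<forall>x. \<bar>a x - g x\<bar> < \<delta>)"
  proof (intro allI impI)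
    fix g :: "real^'d \<Rightarrow> real" and \<delta> :: real
    assume g: "zperiodic g \<and> continuous_on UNIV g \<and> (\<forall>x. g x \<in> {1..\<Lambda>})" and d: "\<delta> > 0"
    obtain a where "zperiodic a" "smooth_fun a" "\<forall>x. a x \<in> {1..\<Lambda>}" "\<exists>s1 s2. feat a s1 s2"
      "\<forall>x. \<bar>a x - g x\<bar> < \<delta>"
      using density_step[OF assms(2) _ _ _ d] g by blast
    then show "\<exists>a\<in>F. \<forall>x. \<bar>a x - g x\<bar> < \<delta>" unfolding F_def by blast
  qed
  have C: "\<forall>a\<in>F. \<forall>u0 :: real^'d \<Rightarrow> real. \<forall>u :: real \<Rightarrow> real^'d \<Rightarrow> real \<Rightarrow> real.
        uniformly_continuous_on UNIV u0 \<and> (\<forall>eps>0. visc_solution a eps u0 (u eps)) \<longrightarrow>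
        (\<forall>x. \<forall>t>0. hr_limsup u x t \<ge> ereal (u0 x) \<and> ereal (u0 x) \<ge> hr_liminf u x t)"
  proof (intro ballI allI impI conjI)
    fix a u0 u x and t :: real
    assume aF: "a \<in> F"
      and h: "uniformly_continuous_on UNIV u0 \<and> (\<forall>eps>0. visc_solution a eps u0 (u eps))" and t: "t > 0"
    obtain s1 s2 where f: "feat a s1 s2" using aF unfolding F_def by blast
    have a2: "Ck 2 a" using aF unfolding smooth_fun_def F_def by blast
    have apos: "\<And>z. a z \<ge> 0" using aF unfolding F_def by (auto intro: order_trans[of 0 1])
    have uc: "continuous_on UNIV u0" using h uniformly_continuous_imp_continuous by blast
    have sol: "\<forall>eps>0. visc_solution a eps u0 (u eps)" using h by blast
    show "hr_limsup u x t \<ge> ereal (u0 x)" by (rule pin_hr(1)[OF f apos a2 uc sol t])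
    show "ereal (u0 x) \<ge> hr_liminf u x t" by (rule pin_hr(2)[OF f apos a2 uc sol t])
  qed
  show ?thesis using A B C by blast
qed


end
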